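(* Let $D\subset\mathbb{R}$ be an open interval, $t_0\in D$, and let $y_1,\dots,y_m:D\to\mathbb{R}$ be analytic with differential transforms $Y_j(i)=\frac{1}{i!}\frac{d^i y_j}{dt^i}(t_0)$. Let $f(t,y_1,\dots,y_m)$ be an analytic function defined on a neighbourhood of $\{(t,y_1(t),\dots,y_m(t)):t\in D\}$, not of the product form $f_0(t)f_1(y_1)\cdots f_m(y_m)$, and let $F(n)=\frac{1}{n!}\left[\frac{d^n}{dt^n} f(t,y_1(t),\dots,y_m(t))\right]_{t=t_0}$, regarded as a function of the independent variables $t_0$ and $Y_j(k)$ ($1\le j\le m$, $0\le k\le n$) via $F(n)=\frac{1}{n!}\frac{d^n}{d\lambda^n}\big[f(t_0+\lambda,\sum_i Y_1(i)\lambda^i,\dots,\sum_i Y_m(i)\lambda^i)\big]_{\lambda=0}$. Then $F(0)=f(t_0,Y_1(0),\dots,Y_m(0))$ and, for $n=1,2,\dots$, $$F(n)=\frac{1}{n}\left(\frac{\partial}{\partial t_0}F(n-1)+\sum_{j=1}^{m}\sum_{k=0}^{n-1}(k+1)\,Y_j(k+1)\,\frac{\partial}{\partial Y_j(k)}F(n-1)\right).$$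
   Context: The differential transform of an analytic function $g$ at $t_0$ is the sequence $G(i)=\frac{1}{i!}g^{(i)}(t_0)$. *)

theory Defs
  imports "HOL-Analysis.Analysis"
begin

definition real_analytic_on :: "(real \<Rightarrow> real) \<Rightarrow> real set \<Rightarrow> bool" where
  "real_analytic_on g D \<longleftrightarrow>
     (\<forall>x\<in>D. \<exists>r>0. \<exists>c::nat \<Rightarrow> real.
        \<forall>z. \<bar>z - x\<bar> < r \<longrightarrow> (\<lambda>i. c i * (z - x) ^ i) sums g z)"

text \<open>Real analyticity of a function f(t, y_1, ..., y_m) (coordinates y indexed by the finite
  type 'm) on a set U: locally the sum of an (unconditionally, i.e. absolutely) convergent
  multivariate power series in (t - t', y - y').\<close>
definition mv_analytic_on :: "(real \<Rightarrow> real^'m \<Rightarrow> real) \<Rightarrow> (real \<times> (real^'m)) set \<Rightarrow> bool" where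
  "mv_analytic_on f U \<longleftrightarrow>
     (\<forall>p\<in>U. \<exists>r>0. \<exists>c::nat \<times> ('m \<Rightarrow> nat) \<Rightarrow> real.
        \<forall>s z. dist (s, z) p < r \<longrightarrow>
          ((\<lambda>(a, \<alpha>). c (a, \<alpha>) * (s - fst p) ^ a * (\<Prod>j\<in>UNIV. (z $ j - snd p $ j) ^ \<alpha> j))
             has_sum f s z) UNIV)"

definition product_form_on :: "(real \<Rightarrow> real^'m \<Rightarrow> real) \<Rightarrow> (real \<times> (real^'m)) set \<Rightarrow> bool" where
  "product_form_on f U \<longleftrightarrow>
     (\<exists>f0 fs. \<forall>(t, z)\<in>U. f t z = f0 t * (\<Prod>j\<in>UNIV. fs j (z $ j)))"

definition DT_F :: "(real \<Rightarrow> real^'m \<Rightarrow> real) \<Rightarrow> nat \<Rightarrow> real \<Rightarrow> ('m \<Rightarrow> nat \<Rightarrow> real) \<Rightarrow> real" where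
  "DT_F f n t0 Y =
     (deriv ^^ n) (\<lambda>l. f (t0 + l) (\<chi> j. \<Sum>i\<le>n. Y j i * l ^ i)) 0 / fact n"

end

theory Submission
  imports Defs "HOL-Complex_Analysis.Complex_Analysis"
begin

lemma higher_deriv_sum:
  fixes f :: "'i \<Rightarrow> complex \<Rightarrow> complex"
  assumes "finite I" "\<And>i. i \<in> I \<Longrightarrow> f i holomorphic_on S" "open S" "z \<in> S"
  shows "(deriv ^^ n) (\<lambda>w. \<Sum>i\<in>I. f i w) z = (\<Sum>i\<in>I. (deriv ^^ n) (f i) z)"
  using assms(1,2)
proof (induction I rule: finite_induct)
  case empty
  then show ?case by (cases n) simp_all
next
  case (insert x F)
  have "(deriv ^^ n) (\<lambda>w. \<Sum>i\<in>insert x F. f i w) z = (deriv ^^ n) (\<lambda>w. f x w + (\<Sum>i\<in>F. f i w)) z"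
    using insert by simp
  also have "\<dots> = (deriv ^^ n) (f x) z + (deriv ^^ n) (\<lambda>w. \<Sum>i\<in>F. f i w) z"
    using insert assms(3,4) by (intro higher_deriv_add) (auto intro!: holomorphic_on_sum)
  finally show ?case using insert by simp
qed

lemma series_holo:
  fixes T :: "'i \<Rightarrow> complex \<Rightarrow> complex" and W :: "'i \<Rightarrow> real"
  assumes S: "open S" and hol: "\<And>i. T i holomorphic_on S"
    and bd: "\<And>i x. x \<in> S \<Longrightarrow> norm (T i x) \<le> W i" and W: "W summable_on UNIV"
  shows "(\<lambda>x. \<Sum>\<^sub>\<infinity>i. T i x) holomorphic_on S"
    and "\<And>x m. x \<in> S \<Longrightarrow> ((\<lambda>i. (deriv ^^ m) (T i) x) has_sum (deriv ^^ m) (\<lambda>x. \<Sum>\<^sub>\<infinity>i. T i x) x) UNIV"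
    and "\<And>x. x \<in> S \<Longrightarrow> ((\<lambda>i. T i x) has_sum (\<Sum>\<^sub>\<infinity>i. T i x)) UNIV"
proof -
  have ul: "uniform_limit S (\<lambda>X x. \<Sum>i\<in>X. T i x) (\<lambda>x. \<Sum>\<^sub>\<infinity>i. T i x) (finite_subsets_at_top UNIV)"
  proof (rule Weierstrass_m_test_general)
    fix i x assume "i \<in> (UNIV::'i set)" "x \<in> S" then show "norm (T i x) \<le> W i" using bd by blast
  qed (rule W)
  have F: "finite_subsets_at_top (UNIV::'i set) \<noteq> bot" by simp
  show hs: "((\<lambda>i. T i x) has_sum (\<Sum>\<^sub>\<infinity>i. T i x)) UNIV" if "x \<in> S" for x
  proof -
    have "(\<lambda>i. norm (T i x)) summable_on UNIV"
      by (rule Infinite_Sum.abs_summable_on_comparison_test'[OF W]) (use bd that in auto)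
    then have "(\<lambda>i. T i x) summable_on UNIV" by (rule abs_summable_summable)
    then show ?thesis by (rule has_sum_infsum)
  qed
  show "(\<lambda>x. \<Sum>\<^sub>\<infinity>i. T i x) holomorphic_on S"
  proof -
    have "(\<lambda>x. \<Sum>\<^sub>\<infinity>i. T i x) analytic_on S"
      unfolding analytic_on_def
    proof
      fix x assume "x \<in> S"
      then obtain r where r: "r > 0" "cball x r \<subseteq> S" using S open_contains_cball by blast
      have ev: "\<forall>\<^sub>F n in finite_subsets_at_top UNIV. continuous_on (cball x r) (\<lambda>x. \<Sum>i\<in>n. T i x) \<and> (\<lambda>x. \<Sum>i\<in>n. T i x) holomorphic_on ball x r"
      proof (intro always_eventually allI conjI)
        fix X
        have h: "(\<lambda>x. \<Sum>i\<in>X. T i x) holomorphic_on S" using hol by (intro holomorphic_on_sum) auto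
        show "(\<lambda>x. \<Sum>i\<in>X. T i x) holomorphic_on ball x r"
          using h r(2) ball_subset_cball holomorphic_on_subset by blast
        show "continuous_on (cball x r) (\<lambda>x. \<Sum>i\<in>X. T i x)"
          using h r(2) holomorphic_on_imp_continuous_on holomorphic_on_subset by blast
      qed
      have ul': "uniform_limit (cball x r) (\<lambda>X x. \<Sum>i\<in>X. T i x) (\<lambda>x. \<Sum>\<^sub>\<infinity>i. T i x) (finite_subsets_at_top UNIV)"
        using ul r uniform_limit_on_subset by blast
      have Fnt: "\<not> trivial_limit (finite_subsets_at_top (UNIV::'i set))" using F by simp
      obtain "continuous_on (cball x r) (\<lambda>x. \<Sum>\<^sub>\<infinity>i. T i x)" "(\<lambda>x. \<Sum>\<^sub>\<infinity>i. T i x) holomorphic_on ball x r"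
        by (rule holomorphic_uniform_limit[OF ev ul' Fnt])
      then show "\<exists>e>0. (\<lambda>x. \<Sum>\<^sub>\<infinity>i. T i x) holomorphic_on ball x e" using r by blast
    qed
    then show ?thesis by (rule analytic_imp_holomorphic)
  qed
  show "((\<lambda>i. (deriv ^^ m) (T i) x) has_sum (deriv ^^ m) (\<lambda>x. \<Sum>\<^sub>\<infinity>i. T i x) x) UNIV" if x: "x \<in> S" for x m
  proof -
    have "((\<lambda>X. (deriv ^^ m) (\<lambda>x. \<Sum>i\<in>X. T i x) x) \<longlongrightarrow> (deriv ^^ m) (\<lambda>x. \<Sum>\<^sub>\<infinity>i. T i x) x) (finite_subsets_at_top UNIV)"
      by (rule higher_deriv_complex_uniform_limit[OF ul _ F S x])
         (use hol in \<open>blast intro: always_eventually holomorphic_on_sum\<close>)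
    moreover have "\<forall>\<^sub>F X in finite_subsets_at_top UNIV. (deriv ^^ m) (\<lambda>x. \<Sum>i\<in>X. T i x) x = (\<Sum>i\<in>X. (deriv ^^ m) (T i) x)"
    proof (rule eventually_finite_subsets_at_top_weakI)
      fix X :: "'i set" assume "finite X"
      show "(deriv ^^ m) (\<lambda>x. \<Sum>i\<in>X. T i x) x = (\<Sum>i\<in>X. (deriv ^^ m) (T i) x)"
        by (rule higher_deriv_sum[OF \<open>finite X\<close> hol S x])
    qed
    ultimately have "((\<lambda>X. \<Sum>i\<in>X. (deriv ^^ m) (T i) x) \<longlongrightarrow> (deriv ^^ m) (\<lambda>x. \<Sum>\<^sub>\<infinity>i. T i x) x) (finite_subsets_at_top UNIV)"
      using tendsto_cong by fast
    then show ?thesis unfolding has_sum_def by simp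
  qed
qed

lemma swap:
  fixes A B G :: "'i \<Rightarrow> complex \<Rightarrow> complex" and e :: "'i \<Rightarrow> nat" and d :: "'i \<Rightarrow> complex"
    and W :: "'i \<Rightarrow> real"
  assumes R: "R > 0" and \<delta>: "\<delta> > 0"
    and hA: "\<And>a. A a holomorphic_on ball 0 R" and hB: "\<And>a. B a holomorphic_on ball 0 R"
    and hG: "\<And>a. G a holomorphic_on ball 0 R"
    and bd: "\<And>a \<mu> w. norm \<mu> < \<delta> \<Longrightarrow> norm w < R \<Longrightarrow>
               norm (d a * ((A a w + \<mu> * B a w) ^ e a * G a w)) \<le> W a"
    and W: "W summable_on UNIV"
  shows "\<exists>D. ((\<lambda>\<mu>. (deriv ^^ m) (\<lambda>w. \<Sum>\<^sub>\<infinity>a. d a * ((A a w + \<mu> * B a w) ^ e a * G a w)) 0)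
                 has_field_derivative D) (at 0)
           \<and> ((\<lambda>a. d a * of_nat (e a) * (deriv ^^ m) (\<lambda>w. B a w * A a w ^ (e a - 1) * G a w) 0)
                 has_sum D) UNIV"
proof -
  define R' where "R' = R/2"
  have R': "R' > 0" "R' < R" using R by (auto simp: R'_def)
  define k where "k a i = of_nat (e a choose i) * (deriv ^^ m) (\<lambda>w. B a w ^ i * A a w ^ (e a - i) * G a w) 0" for a i
  define P where "P a \<mu> = (deriv ^^ m) (\<lambda>w. (A a w + \<mu> * B a w) ^ e a * G a w) 0" for a \<mu>
  have o: "open (ball (0::complex) R)" "(0::complex) \<in> ball 0 R" using R by auto
  have Ppoly: "P a \<mu> = (\<Sum>i\<le>e a. \<mu> ^ i * k a i)" for a \<mu>
  proof -
    have eq: "(\<lambda>w. (A a w + \<mu> * B a w) ^ e a * G a w) =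
      (\<lambda>w. \<Sum>i\<le>e a. \<mu> ^ i * (of_nat (e a choose i) * (B a w ^ i * A a w ^ (e a - i) * G a w)))"
    proof (rule ext)
      fix w
      have "(A a w + \<mu> * B a w) ^ e a = (\<Sum>i\<le>e a. of_nat (e a choose i) * (\<mu> * B a w) ^ i * A a w ^ (e a - i))"
        using binomial_ring[of "\<mu> * B a w" "A a w" "e a"] by (simp add: add.commute)
      then show "(A a w + \<mu> * B a w) ^ e a * G a w =
          (\<Sum>i\<le>e a. \<mu> ^ i * (of_nat (e a choose i) * (B a w ^ i * A a w ^ (e a - i) * G a w)))"
        by (simp add: sum_distrib_right sum_distrib_left power_mult_distrib mult_ac)
    qed
    have hol: "(\<lambda>w. B a w ^ i * A a w ^ (e a - i) * G a w) holomorphic_on ball 0 R" for i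
      using hA hB hG by (intro holomorphic_intros) auto
    have "P a \<mu> = (\<Sum>i\<le>e a. (deriv ^^ m) (\<lambda>w. \<mu> ^ i * (of_nat (e a choose i) * (B a w ^ i * A a w ^ (e a - i) * G a w))) 0)"
      unfolding P_def eq
      by (rule higher_deriv_sum[OF _ _ o]) (use hA hB hG in \<open>auto intro!: holomorphic_intros\<close>)
    also have "\<dots> = (\<Sum>i\<le>e a. \<mu> ^ i * k a i)"
    proof (rule sum.cong[OF refl])
      fix i
      have "(deriv ^^ m) (\<lambda>w. \<mu> ^ i * (of_nat (e a choose i) * (B a w ^ i * A a w ^ (e a - i) * G a w))) 0
          = \<mu> ^ i * (deriv ^^ m) (\<lambda>w. of_nat (e a choose i) * (B a w ^ i * A a w ^ (e a - i) * G a w)) 0"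
        by (rule higher_deriv_cmult[OF _ o(2) o(1)]) (use hA hB hG in \<open>auto intro!: holomorphic_intros\<close>)
      also have "\<dots> = \<mu> ^ i * k a i"
        unfolding k_def by (subst higher_deriv_cmult[OF hol o(2) o(1)]) simp
      finally show "(deriv ^^ m) (\<lambda>w. \<mu> ^ i * (of_nat (e a choose i) * (B a w ^ i * A a w ^ (e a - i) * G a w))) 0
          = \<mu> ^ i * k a i" .
    qed
    finally show ?thesis .
  qed
  define T where "T a \<mu> = d a * P a \<mu>" for a \<mu>
  have Tpoly: "T a = (\<lambda>\<mu>. d a * (\<Sum>i\<le>e a. \<mu> ^ i * k a i))" for a
    by (rule ext) (simp add: T_def Ppoly)
  have Thol: "T a holomorphic_on ball 0 \<delta>" for a
    unfolding Tpoly by (intro holomorphic_intros)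
  have holw: "(\<lambda>w. d a * ((A a w + \<mu> * B a w) ^ e a * G a w)) holomorphic_on ball 0 R" for a \<mu>
    using hA hB hG by (intro holomorphic_intros) auto
  have TP: "T a \<mu> = (deriv ^^ m) (\<lambda>w. d a * ((A a w + \<mu> * B a w) ^ e a * G a w)) 0" for a \<mu>
    unfolding T_def P_def
    by (subst higher_deriv_cmult[OF _ o(2) o(1)]) (use hA hB hG in \<open>auto intro!: holomorphic_intros\<close>)
  have Tbd: "norm (T a \<mu>) \<le> fact m * W a / R' ^ m" if "\<mu> \<in> ball 0 \<delta>" for a \<mu>
  proof -
    have "norm ((deriv ^^ m) (\<lambda>w. d a * ((A a w + \<mu> * B a w) ^ e a * G a w)) 0) \<le> fact m * W a / R' ^ m"
    proof (rule Cauchy_inequality)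
      show "(\<lambda>w. d a * ((A a w + \<mu> * B a w) ^ e a * G a w)) holomorphic_on ball 0 R'"
        by (rule holomorphic_on_subset[OF holw]) (use R' in auto)
      have "cball 0 R' \<subseteq> ball (0::complex) R" using R' by auto
      then show "continuous_on (cball 0 R') (\<lambda>w. d a * ((A a w + \<mu> * B a w) ^ e a * G a w))"
        using holw holomorphic_on_imp_continuous_on holomorphic_on_subset by blast
      show "norm (d a * ((A a w + \<mu> * B a w) ^ e a * G a w)) \<le> W a" if "norm (0 - w) = R'" for w
        using that R' \<open>\<mu> \<in> ball 0 \<delta>\<close> by (intro bd) auto
    qed (use R' in auto)
    then show ?thesis by (simp add: TP)
  qed
  have W2: "(\<lambda>a. fact m * W a / R' ^ m) summable_on UNIV"
    using summable_on_cmult_right[OF W, of "fact m / R' ^ m"] by (simp add: field_simps)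
  note SH = series_holo[of "ball 0 \<delta>" T, OF _ Thol Tbd W2]
  define S where "S \<mu> = (\<Sum>\<^sub>\<infinity>a. T a \<mu>)" for \<mu>
  have Shol: "S holomorphic_on ball 0 \<delta>" unfolding S_def using SH(1) by simp
  have dS: "((\<lambda>a. deriv (T a) 0) has_sum deriv S 0) UNIV"
    using SH(2)[of 0 1] \<delta> by (simp add: S_def[abs_def])
  have dT: "deriv (T a) 0 = d a * of_nat (e a) * (deriv ^^ m) (\<lambda>w. B a w * A a w ^ (e a - 1) * G a w) 0" for a
  proof -
    have "(T a has_field_derivative d a * (\<Sum>i\<le>e a. (of_nat i * 0 ^ (i - 1)) * k a i)) (at 0)"
      unfolding Tpoly by (auto intro!: derivative_eq_intros)
    moreover have "(\<Sum>i\<le>e a. (of_nat i * 0 ^ (i - 1)) * k a i) = (\<Sum>i\<le>e a. (if i = 1 then k a i else 0))"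
      by (rule sum.cong) auto
    moreover have "(\<Sum>i\<le>e a. (if i = 1 then k a i else 0)) = (if 1 \<le> e a then k a 1 else 0)"
      by (simp add: sum.delta)
    ultimately have "deriv (T a) 0 = d a * (if 1 \<le> e a then k a 1 else 0)"
      by (simp add: DERIV_imp_deriv)
    then show ?thesis by (auto simp: k_def)
  qed
  have CS: "(deriv ^^ m) (\<lambda>w. \<Sum>\<^sub>\<infinity>a. d a * ((A a w + \<mu> * B a w) ^ e a * G a w)) 0 = S \<mu>"
    if "\<mu> \<in> ball 0 \<delta>" for \<mu>
  proof -
    have "((\<lambda>a. (deriv ^^ m) (\<lambda>w. d a * ((A a w + \<mu> * B a w) ^ e a * G a w)) 0) has_sum
           (deriv ^^ m) (\<lambda>w. \<Sum>\<^sub>\<infinity>a. d a * ((A a w + \<mu> * B a w) ^ e a * G a w)) 0) UNIV"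
      by (rule series_holo(2)[OF o(1) holw _ W o(2)]) (use that in \<open>auto intro!: bd\<close>)
    then have "((\<lambda>a. T a \<mu>) has_sum (deriv ^^ m) (\<lambda>w. \<Sum>\<^sub>\<infinity>a. d a * ((A a w + \<mu> * B a w) ^ e a * G a w)) 0) UNIV"
      by (simp add: TP)
    then show ?thesis unfolding S_def by (simp add: infsumI)
  qed
  have "(S has_field_derivative deriv S 0) (at 0)"
    using Shol \<delta> by (intro holomorphic_derivI[of _ "ball 0 \<delta>"]) auto
  then have "((\<lambda>\<mu>. (deriv ^^ m) (\<lambda>w. \<Sum>\<^sub>\<infinity>a. d a * ((A a w + \<mu> * B a w) ^ e a * G a w)) 0)
                 has_field_derivative deriv S 0) (at 0)"
    by (rule has_field_derivative_transform_within_open[of _ _ _ "ball 0 \<delta>"]) (use \<delta> CS in auto)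
  moreover have "((\<lambda>a. d a * of_nat (e a) * (deriv ^^ m) (\<lambda>w. B a w * A a w ^ (e a - 1) * G a w) 0)
                 has_sum deriv S 0) UNIV"
    using dS by (simp add: dT)
  ultimately show ?thesis by blast
qed

lemma real_hderiv:
  fixes g :: "complex \<Rightarrow> complex" and h :: "real \<Rightarrow> real"
  assumes hol: "g holomorphic_on ball (of_real x0) R"
    and eq: "\<And>x. \<bar>x - x0\<bar> < R \<Longrightarrow> h x = Re (g (of_real x))"
  shows "\<bar>x - x0\<bar> < R \<Longrightarrow> (deriv ^^ n) h x = Re ((deriv ^^ n) g (of_real x))"
proof (induction n arbitrary: x)
  case 0
  then show ?case using eq by simp
next
  case (Suc n)
  define T where "T = {x. \<bar>x - x0\<bar> < R}"
  have T: "open T" "x \<in> T" using Suc.prems unfolding T_def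
    by (auto intro!: open_Collect_less continuous_intros)
  have inb: "of_real y \<in> ball (of_real x0 :: complex) R" if "\<bar>y - x0\<bar> < R" for y
    using that by (simp add: dist_norm flip: of_real_diff)
  have "((\<lambda>y. Re ((deriv ^^ n) g (of_real y))) has_field_derivative Re ((deriv ^^ Suc n) g (of_real x))) (at x)"
  proof (rule has_field_derivative_Re, rule has_vector_derivative_real_field)
    show "((deriv ^^ n) g has_field_derivative (deriv ^^ Suc n) g (of_real x)) (at (of_real x))"
      by (rule has_field_derivative_higher_deriv[OF hol open_ball inb[OF Suc.prems]])
  qed
  then have "((deriv ^^ n) h has_field_derivative Re ((deriv ^^ Suc n) g (of_real x))) (at x)"
    by (rule has_field_derivative_transform_within_open[OF _ T]) (use Suc.IH in \<open>auto simp: T_def\<close>)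
  then show ?case by (simp add: DERIV_imp_deriv)
qed

definition agree :: "nat \<Rightarrow> (complex \<Rightarrow> complex) \<Rightarrow> (complex \<Rightarrow> complex) \<Rightarrow> bool" where
  "agree m f g \<longleftrightarrow> (\<forall>i\<le>m. (deriv ^^ i) f 0 = (deriv ^^ i) g 0)"

lemma agree_refl: "agree m f f" by (simp add: agree_def)

lemma agree_mult:
  assumes S: "open S" "0 \<in> S"
    and h: "f1 holomorphic_on S" "f2 holomorphic_on S" "g1 holomorphic_on S" "g2 holomorphic_on S"
    and a: "agree m f1 f2" "agree m g1 g2"
  shows "agree m (\<lambda>w. f1 w * g1 w) (\<lambda>w. f2 w * g2 w)"
  unfolding agree_def
proof (intro allI impI)
  fix i assume i: "i \<le> m"
  show "(deriv ^^ i) (\<lambda>w. f1 w * g1 w) 0 = (deriv ^^ i) (\<lambda>w. f2 w * g2 w) 0"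
    unfolding higher_deriv_mult[OF h(1,3) S] higher_deriv_mult[OF h(2,4) S]
    by (rule sum.cong[OF refl]) (use a i in \<open>auto simp: agree_def\<close>)
qed

lemma agree_power:
  assumes S: "open S" "0 \<in> S" and h: "f holomorphic_on S" "g holomorphic_on S" and a: "agree m f g"
  shows "agree m (\<lambda>w. f w ^ k) (\<lambda>w. g w ^ k)"
proof (induction k)
  case 0
  then show ?case by (simp add: agree_refl)
next
  case (Suc k)
  have "agree m (\<lambda>w. f w * f w ^ k) (\<lambda>w. g w * g w ^ k)"
    by (rule agree_mult[OF S h _ _ a Suc]) (use h in \<open>auto intro!: holomorphic_intros\<close>)
  then show ?case by simp
qed

lemma agree_prod:
  fixes f g :: "'j \<Rightarrow> complex \<Rightarrow> complex"
  assumes S: "open S" "0 \<in> S" and I: "finite I"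
    and h: "\<And>j. j \<in> I \<Longrightarrow> f j holomorphic_on S" "\<And>j. j \<in> I \<Longrightarrow> g j holomorphic_on S"
    and a: "\<And>j. j \<in> I \<Longrightarrow> agree m (f j) (g j)"
  shows "agree m (\<lambda>w. \<Prod>j\<in>I. f j w) (\<lambda>w. \<Prod>j\<in>I. g j w)"
  using I h a
proof (induction I rule: finite_induct)
  case empty
  then show ?case by (simp add: agree_refl)
next
  case (insert x F)
  have "agree m (\<lambda>w. f x w * (\<Prod>j\<in>F. f j w)) (\<lambda>w. g x w * (\<Prod>j\<in>F. g j w))"
    by (rule agree_mult[OF S]) (use insert in \<open>auto intro!: holomorphic_intros\<close>)
  then show ?case using insert by simp
qed

lemma hd_power_at:
  "(deriv ^^ l) (\<lambda>w::complex. (w - z) ^ i) z = (if i = l then fact l else 0)"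
proof -
  have "(deriv ^^ l) (\<lambda>w::complex. (w - z) ^ i) z = pochhammer (of_nat (Suc i - l)) l * (z - z) ^ (i - l)"
    by (rule higher_deriv_power)
  also have "\<dots> = (if i = l then fact l else 0)"
  proof (cases "i = l")
    case True
    then show ?thesis by (simp add: pochhammer_fact)
  next
    case False
    show ?thesis
    proof (cases "i < l")
      case True
      then have "Suc i - l = 0" by simp
      then show ?thesis using True False by (simp add: pochhammer_0_left)
    next
      case False2: False
      then show ?thesis using False by simp
    qed
  qed
  finally show ?thesis .
qed

lemma hd_power0: "(deriv ^^ l) (\<lambda>w::complex. w ^ i) 0 = (if i = l then fact l else 0)"
  using hd_power_at[of l 0 i] by simp

lemma hd_poly:
  fixes c :: "nat \<Rightarrow> complex"
  shows "(deriv ^^ l) (\<lambda>w. \<Sum>i\<le>N. c i * w ^ i) 0 = (if l \<le> N then fact l * c l else 0)"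
proof -
  have "(deriv ^^ l) (\<lambda>w. \<Sum>i\<le>N. c i * w ^ i) 0 = (\<Sum>i\<le>N. (deriv ^^ l) (\<lambda>w. c i * w ^ i) 0)"
    by (rule higher_deriv_sum[of _ _ UNIV]) (auto intro!: holomorphic_intros)
  also have "\<dots> = (\<Sum>i\<le>N. c i * (if i = l then fact l else 0))"
    by (rule sum.cong[OF refl], subst higher_deriv_cmult[of _ UNIV]) (auto intro!: holomorphic_intros simp: hd_power0)
  also have "\<dots> = (if l \<le> N then fact l * c l else 0)"
    by (simp add: if_distrib sum.delta' mult.commute cong: if_cong)
  finally show ?thesis .
qed

lemma has_sum_delta: "((\<lambda>i. if i = l then v else 0) has_sum (v::'a::{comm_monoid_add,topological_space})) UNIV"
proof -
  have "((\<lambda>i. if i = l then v else 0) has_sum sum (\<lambda>i. if i = l then v else 0) {l}) {l}"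
    by (rule has_sum_finite) simp
  then have "((\<lambda>i. if i = l then v else 0) has_sum v) {l}" by simp
  then show ?thesis by (rule has_sum_cong_neutral[THEN iffD1, rotated -1]) auto
qed

lemma pser:
  fixes a :: "nat \<Rightarrow> complex"
  assumes r: "r > 0" and sm: "summable (\<lambda>i. norm (a i) * r ^ i)"
  shows "(\<lambda>w. \<Sum>\<^sub>\<infinity>i. a i * (w - z) ^ i) holomorphic_on ball z r"
    and "(deriv ^^ l) (\<lambda>w. \<Sum>\<^sub>\<infinity>i. a i * (w - z) ^ i) z = fact l * a l"
    and "\<And>w. w \<in> ball z r \<Longrightarrow> ((\<lambda>i. a i * (w - z) ^ i) has_sum (\<Sum>\<^sub>\<infinity>i. a i * (w - z) ^ i)) UNIV"
proof -
  have W: "(\<lambda>i. norm (a i) * r ^ i) summable_on UNIV"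
    using sm r by (subst summable_on_UNIV_nonneg_real_iff) auto
  have bd: "norm (a i * (w - z) ^ i) \<le> norm (a i) * r ^ i" if "w \<in> ball z r" for i w
  proof -
    have "norm (w - z) \<le> r" using that by (simp add: dist_norm norm_minus_commute)
    then show ?thesis by (simp add: norm_mult norm_power mult_left_mono power_mono)
  qed
  have hol: "\<And>i. (\<lambda>w. a i * (w - z) ^ i) holomorphic_on ball z r" by (auto intro!: holomorphic_intros)
  note SH = series_holo[of "ball z r" "\<lambda>i w. a i * (w - z) ^ i", OF open_ball hol bd W]
  show "(\<lambda>w. \<Sum>\<^sub>\<infinity>i. a i * (w - z) ^ i) holomorphic_on ball z r"
    using SH(1) by (auto intro!: holomorphic_intros)
  show "\<And>w. w \<in> ball z r \<Longrightarrow> ((\<lambda>i. a i * (w - z) ^ i) has_sum (\<Sum>\<^sub>\<infinity>i. a i * (w - z) ^ i)) UNIV"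
    using SH(3) by (auto intro!: holomorphic_intros)
  have "((\<lambda>i. (deriv ^^ l) (\<lambda>w. a i * (w - z) ^ i) z) has_sum (deriv ^^ l) (\<lambda>w. \<Sum>\<^sub>\<infinity>i. a i * (w - z) ^ i) z) UNIV"
    using SH(2)[of z l] r by (auto intro!: holomorphic_intros)
  moreover have "(\<lambda>i. (deriv ^^ l) (\<lambda>w. a i * (w - z) ^ i) z) = (\<lambda>i. if i = l then fact l * a l else 0)"
  proof
    fix i
    have "(deriv ^^ l) (\<lambda>w. a i * (w - z) ^ i) z = a i * (deriv ^^ l) (\<lambda>w. (w - z) ^ i) z"
      by (rule higher_deriv_cmult[of _ UNIV]) (auto intro!: holomorphic_intros)
    then show "(deriv ^^ l) (\<lambda>w. a i * (w - z) ^ i) z = (if i = l then fact l * a l else 0)"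
      by (simp add: hd_power_at mult.commute)
  qed
  ultimately have hs: "((\<lambda>i. if i = l then fact l * a l else 0) has_sum (deriv ^^ l) (\<lambda>w. \<Sum>\<^sub>\<infinity>i. a i * (w - z) ^ i) z) UNIV"
    by metis
  show "(deriv ^^ l) (\<lambda>w. \<Sum>\<^sub>\<infinity>i. a i * (w - z) ^ i) z = fact l * a l"
    using has_sum_unique[OF has_sum_delta hs] by simp
qed

lemma small_ball:
  fixes \<phi> :: "'j::finite \<Rightarrow> complex \<Rightarrow> complex"
  assumes "\<And>j. isCont (\<phi> j) 0" "\<And>j. \<phi> j 0 = 0" "\<epsilon> > 0"
  shows "\<exists>R>0. \<forall>w. norm w < R \<longrightarrow> (\<forall>j. norm (\<phi> j w) < \<epsilon>)"
proof -
  have "\<forall>\<^sub>F w in nhds 0. norm (\<phi> j w - \<phi> j 0) < \<epsilon>" for j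
  proof -
    have "\<forall>\<^sub>F w in nhds 0. w \<noteq> 0 \<longrightarrow> norm (\<phi> j w - \<phi> j 0) < \<epsilon>"
      using assms(1)[of j] assms(3) unfolding isCont_def
      by (simp add: tendsto_iff dist_norm eventually_at_filter)
    then show ?thesis by (rule eventually_mono) (use assms(3) in auto)
  qed
  then have "\<forall>\<^sub>F w in nhds 0. \<forall>j. norm (\<phi> j w) < \<epsilon>"
    using assms(2) by (simp add: eventually_all_finite)
  then show ?thesis unfolding eventually_nhds_metric by (auto simp: dist_norm)
qed

lemma real_deriv_from_complex:
  fixes C :: "complex \<Rightarrow> complex" and \<phi> :: "real \<Rightarrow> real"
  assumes d: "(C has_field_derivative D) (at 0)" and \<delta>: "\<delta> > 0"
    and eq: "\<And>s. \<bar>s - x0\<bar> < \<delta> \<Longrightarrow> \<phi> s = Re (C (of_real (s - x0))) / K"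
  shows "deriv \<phi> x0 = Re D / K"
proof -
  have d2: "((\<lambda>w. C (w - of_real x0)) has_field_derivative D) (at (of_real x0))"
    using DERIV_chain2[OF _ DERIV_diff[OF DERIV_ident DERIV_const], of C D "of_real x0" "of_real x0"] d
    by simp
  have "((\<lambda>s. (\<lambda>w. C (w - of_real x0)) (of_real s)) has_vector_derivative D) (at x0)"
    by (rule has_vector_derivative_real_field[OF d2])
  then have "((\<lambda>s. Re (C (of_real s - of_real x0))) has_field_derivative Re D) (at x0)"
    using has_field_derivative_Re by fastforce
  then have "((\<lambda>s. Re (C (of_real s - of_real x0)) / K) has_field_derivative Re D / K) (at x0)"
    by (rule DERIV_cdivide)
  then have "(\<phi> has_field_derivative Re D / K) (at x0)"
  proof (rule has_field_derivative_transform_within_open[of _ _ _ "{s. \<bar>s - x0\<bar> < \<delta>}"])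
    show "open {s. \<bar>s - x0\<bar> < \<delta>}" by (auto intro!: open_Collect_less continuous_intros)
  qed (use \<delta> eq in auto)
  then show ?thesis by (rule DERIV_imp_deriv)
qed

definition Qp :: "('m \<Rightarrow> nat \<Rightarrow> complex) \<Rightarrow> ('m \<Rightarrow> complex) \<Rightarrow> nat \<Rightarrow> 'm \<Rightarrow> complex \<Rightarrow> complex" where
  "Qp C z0 N j w = (\<Sum>i\<le>N. C j i * w ^ i) - z0 j"

lemma Qp_deriv: "(Qp C z0 N j has_field_derivative (\<Sum>k<N. of_nat (k+1) * C j (k+1) * w ^ k)) (at w)"
proof -
  have "(Qp C z0 N j has_field_derivative (\<Sum>i\<le>N. C j i * (of_nat i * w ^ (i - 1)))) (at w)"
    unfolding Qp_def[abs_def] by (auto intro!: derivative_eq_intros sum.cong simp: mult_ac)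
  also have "(\<Sum>i\<le>N. C j i * (of_nat i * w ^ (i - 1))) = (\<Sum>k<N. of_nat (k+1) * C j (k+1) * w ^ k)"
  proof (cases N)
    case 0
    then show ?thesis by simp
  next
    case (Suc n)
    then show ?thesis
      by (simp only: sum.atMost_Suc_shift lessThan_Suc_atMost) (simp add: mult_ac)
  qed
  finally show ?thesis .
qed

lemma Qp_holo[holomorphic_intros]: "Qp C z0 N j holomorphic_on S"
  unfolding Qp_def[abs_def] by (intro holomorphic_intros)

lemma mon_deriv:
  fixes \<beta> :: "'m::finite \<Rightarrow> nat"
  shows "((\<lambda>w. w ^ a * (\<Prod>j\<in>UNIV. Qp C z0 N j w ^ \<beta> j)) has_field_derivative
     (of_nat a * (w ^ (a - 1) * (\<Prod>j\<in>UNIV. Qp C z0 N j w ^ \<beta> j)) +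
      (\<Sum>j\<in>UNIV. \<Sum>k<N. of_nat (k+1) * C j (k+1) *
          (of_nat (\<beta> j) * (w ^ k * Qp C z0 N j w ^ (\<beta> j - 1) *
             (w ^ a * (\<Prod>i\<in>UNIV - {j}. Qp C z0 N i w ^ \<beta> i))))))) (at w)"
proof -
  have p: "((\<lambda>w. \<Prod>j\<in>UNIV. Qp C z0 N j w ^ \<beta> j) has_field_derivative
      (\<Sum>j\<in>UNIV. (of_nat (\<beta> j) * Qp C z0 N j w ^ (\<beta> j - 1) * (\<Sum>k<N. of_nat (k+1) * C j (k+1) * w ^ k))
         * (\<Prod>i\<in>UNIV - {j}. Qp C z0 N i w ^ \<beta> i))) (at w)"
    by (rule has_field_derivative_prod) (auto intro!: derivative_eq_intros Qp_deriv)
  have D: "((\<lambda>w. w ^ a * (\<Prod>j\<in>UNIV. Qp C z0 N j w ^ \<beta> j)) has_field_derivative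
     (of_nat a * w ^ (a - 1) * (\<Prod>j\<in>UNIV. Qp C z0 N j w ^ \<beta> j) +
      w ^ a * (\<Sum>j\<in>UNIV. (of_nat (\<beta> j) * Qp C z0 N j w ^ (\<beta> j - 1) * (\<Sum>k<N. of_nat (k+1) * C j (k+1) * w ^ k))
         * (\<Prod>i\<in>UNIV - {j}. Qp C z0 N i w ^ \<beta> i)))) (at w)"
    by (rule derivative_eq_intros p refl)+ (simp add: mult_ac)
  have eq: "of_nat a * w ^ (a - 1) * (\<Prod>j\<in>UNIV. Qp C z0 N j w ^ \<beta> j) +
      w ^ a * (\<Sum>j\<in>UNIV. (of_nat (\<beta> j) * Qp C z0 N j w ^ (\<beta> j - 1) * (\<Sum>k<N. of_nat (k+1) * C j (k+1) * w ^ k))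
         * (\<Prod>i\<in>UNIV - {j}. Qp C z0 N i w ^ \<beta> i)) =
     (of_nat a * (w ^ (a - 1) * (\<Prod>j\<in>UNIV. Qp C z0 N j w ^ \<beta> j)) +
      (\<Sum>j\<in>UNIV. \<Sum>k<N. of_nat (k+1) * C j (k+1) *
          (of_nat (\<beta> j) * (w ^ k * Qp C z0 N j w ^ (\<beta> j - 1) *
             (w ^ a * (\<Prod>i\<in>UNIV - {j}. Qp C z0 N i w ^ \<beta> i))))))"
    by (simp add: sum_distrib_left sum_distrib_right mult_ac)
  show ?thesis by (rule DERIV_cong[OF D eq])
qed

lemma hd_mon:
  fixes \<beta> :: "'m::finite \<Rightarrow> nat"
  shows "(deriv ^^ Suc m) (\<lambda>w. w ^ a * (\<Prod>j\<in>UNIV. Qp C z0 N j w ^ \<beta> j)) 0 =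
     of_nat a * (deriv ^^ m) (\<lambda>w. w ^ (a - 1) * (\<Prod>j\<in>UNIV. Qp C z0 N j w ^ \<beta> j)) 0 +
      (\<Sum>j\<in>UNIV. \<Sum>k<N. of_nat (k+1) * C j (k+1) *
          (of_nat (\<beta> j) * (deriv ^^ m) (\<lambda>w. w ^ k * Qp C z0 N j w ^ (\<beta> j - 1) *
             (w ^ a * (\<Prod>i\<in>UNIV - {j}. Qp C z0 N i w ^ \<beta> i))) 0))"
proof -
  define F1 where "F1 = (\<lambda>w. w ^ (a - 1) * (\<Prod>j\<in>UNIV. Qp C z0 N j w ^ \<beta> j))"
  define F2 where "F2 = (\<lambda>j k w. w ^ k * Qp C z0 N j w ^ (\<beta> j - 1) *
             (w ^ a * (\<Prod>i\<in>UNIV - {j}. Qp C z0 N i w ^ \<beta> i)))"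
  have h1: "F1 holomorphic_on UNIV" unfolding F1_def by (intro holomorphic_intros)
  have h2: "F2 j k holomorphic_on UNIV" for j k unfolding F2_def by (intro holomorphic_intros)
  have "deriv (\<lambda>w. w ^ a * (\<Prod>j\<in>UNIV. Qp C z0 N j w ^ \<beta> j)) =
     (\<lambda>w. of_nat a * F1 w + (\<Sum>j\<in>UNIV. \<Sum>k<N. of_nat (k+1) * C j (k+1) * (of_nat (\<beta> j) * F2 j k w)))"
    unfolding F1_def F2_def by (rule ext, rule DERIV_imp_deriv, rule mon_deriv)
  then have "(deriv ^^ Suc m) (\<lambda>w. w ^ a * (\<Prod>j\<in>UNIV. Qp C z0 N j w ^ \<beta> j)) 0 =
     (deriv ^^ m) (\<lambda>w. of_nat a * F1 w + (\<Sum>j\<in>UNIV. \<Sum>k<N. of_nat (k+1) * C j (k+1) * (of_nat (\<beta> j) * F2 j k w))) 0"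
    by (simp add: funpow_Suc_right del: funpow.simps)
  also have "\<dots> = (deriv ^^ m) (\<lambda>w. of_nat a * F1 w) 0 +
      (deriv ^^ m) (\<lambda>w. \<Sum>j\<in>UNIV. \<Sum>k<N. of_nat (k+1) * C j (k+1) * (of_nat (\<beta> j) * F2 j k w)) 0"
    by (rule higher_deriv_add[of _ UNIV]) (use h1 h2 in \<open>auto intro!: holomorphic_intros\<close>)
  also have "(deriv ^^ m) (\<lambda>w. of_nat a * F1 w) 0 = of_nat a * (deriv ^^ m) F1 0"
    by (rule higher_deriv_cmult[OF h1]) auto
  also have "(deriv ^^ m) (\<lambda>w. \<Sum>j\<in>UNIV. \<Sum>k<N. of_nat (k+1) * C j (k+1) * (of_nat (\<beta> j) * F2 j k w)) 0
      = (\<Sum>j\<in>UNIV. (deriv ^^ m) (\<lambda>w. \<Sum>k<N. of_nat (k+1) * C j (k+1) * (of_nat (\<beta> j) * F2 j k w)) 0)"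
    by (rule higher_deriv_sum[of _ _ UNIV]) (use h2 in \<open>auto intro!: holomorphic_intros\<close>)
  also have "\<dots> = (\<Sum>j\<in>UNIV. \<Sum>k<N. of_nat (k+1) * C j (k+1) * (of_nat (\<beta> j) * (deriv ^^ m) (F2 j k) 0))"
  proof (rule sum.cong[OF refl])
    fix j
    have "(deriv ^^ m) (\<lambda>w. \<Sum>k<N. of_nat (k+1) * C j (k+1) * (of_nat (\<beta> j) * F2 j k w)) 0
        = (\<Sum>k<N. (deriv ^^ m) (\<lambda>w. of_nat (k+1) * C j (k+1) * (of_nat (\<beta> j) * F2 j k w)) 0)"
      by (rule higher_deriv_sum[of _ _ UNIV]) (use h2 in \<open>auto intro!: holomorphic_intros\<close>)
    also have "\<dots> = (\<Sum>k<N. of_nat (k+1) * C j (k+1) * (of_nat (\<beta> j) * (deriv ^^ m) (F2 j k) 0))"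
    proof (rule sum.cong[OF refl])
      fix k
      have "(deriv ^^ m) (\<lambda>w. of_nat (k+1) * C j (k+1) * (of_nat (\<beta> j) * F2 j k w)) 0
          = of_nat (k+1) * C j (k+1) * (deriv ^^ m) (\<lambda>w. of_nat (\<beta> j) * F2 j k w) 0"
        by (rule higher_deriv_cmult[of _ UNIV]) (use h2 in \<open>auto intro!: holomorphic_intros\<close>)
      also have "(deriv ^^ m) (\<lambda>w. of_nat (\<beta> j) * F2 j k w) 0 = of_nat (\<beta> j) * (deriv ^^ m) (F2 j k) 0"
        by (rule higher_deriv_cmult[OF h2]) auto
      finally show "(deriv ^^ m) (\<lambda>w. of_nat (k+1) * C j (k+1) * (of_nat (\<beta> j) * F2 j k w)) 0
          = of_nat (k+1) * C j (k+1) * (of_nat (\<beta> j) * (deriv ^^ m) (F2 j k) 0)" .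
    qed
    finally show "(deriv ^^ m) (\<lambda>w. \<Sum>k<N. of_nat (k+1) * C j (k+1) * (of_nat (\<beta> j) * F2 j k w)) 0
        = (\<Sum>k<N. of_nat (k+1) * C j (k+1) * (of_nat (\<beta> j) * (deriv ^^ m) (F2 j k) 0))" .
  qed
  finally show ?thesis unfolding F1_def F2_def .
qed

definition deg :: "nat \<times> ('m::finite \<Rightarrow> nat) \<Rightarrow> nat" where
  "deg a = fst a + (\<Sum>j\<in>UNIV. snd a j)"

definition mon :: "nat \<times> ('m::finite \<Rightarrow> nat) \<Rightarrow> complex \<Rightarrow> ('m \<Rightarrow> complex) \<Rightarrow> complex" where
  "mon a u z = u ^ fst a * (\<Prod>j\<in>UNIV. z j ^ snd a j)"

lemma mon_bound:
  assumes "norm u \<le> \<rho>" "\<And>j. norm (z j) \<le> \<rho>"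
  shows "norm (mon a u z) \<le> \<rho> ^ deg a"
proof -
  have r: "0 \<le> \<rho>" using assms(1) norm_ge_zero order_trans by blast
  have "norm (mon a u z) = norm u ^ fst a * (\<Prod>j\<in>UNIV. norm (z j) ^ snd a j)"
    by (simp add: mon_def norm_mult norm_power flip: prod_norm)
  also have "\<dots> \<le> \<rho> ^ fst a * (\<Prod>j\<in>UNIV. \<rho> ^ snd a j)"
    by (intro mult_mono power_mono prod_mono conjI assms) (auto simp: r intro!: prod_nonneg)
  also have "\<dots> = \<rho> ^ deg a" by (simp add: deg_def power_add power_sum)
  finally show ?thesis .
qed

lemma has_sum_sum_fin:
  fixes f :: "'i \<Rightarrow> 'a \<Rightarrow> 'b::{topological_comm_monoid_add}"
  assumes "finite I" "\<And>i. i \<in> I \<Longrightarrow> (f i has_sum s i) A"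
  shows "((\<lambda>x. \<Sum>i\<in>I. f i x) has_sum (\<Sum>i\<in>I. s i)) A"
  using assms
proof (induction I rule: finite_induct)
  case empty
  then show ?case by simp
next
  case (insert x F)
  then show ?case by (simp add: has_sum_add)
qed

lemma hd_Qp:
  "(deriv ^^ l) (Qp C z0 N j) 0 = (if l = 0 then C j 0 - z0 j else if l \<le> N then fact l * C j l else 0)"
proof -
  have "(deriv ^^ l) (Qp C z0 N j) 0 = (deriv ^^ l) (\<lambda>w. (\<Sum>i\<le>N. C j i * w ^ i) - z0 j) 0"
    by (simp add: Qp_def[abs_def])
  also have "\<dots> = (deriv ^^ l) (\<lambda>w. \<Sum>i\<le>N. C j i * w ^ i) 0 - (deriv ^^ l) (\<lambda>w. z0 j) 0"
    by (rule higher_deriv_diff[of _ UNIV]) (auto intro!: holomorphic_intros)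
  also have "\<dots> = (if l = 0 then C j 0 - z0 j else if l \<le> N then fact l * C j l else 0)"
    by (simp add: hd_poly)
  finally show ?thesis .
qed

lemma agree_Qp: "m \<le> N \<Longrightarrow> m \<le> M \<Longrightarrow> agree m (Qp C z0 N j) (Qp C z0 M j)"
  by (auto simp: agree_def hd_Qp)

context
  fixes f :: "real \<Rightarrow> real^'m \<Rightarrow> real" and c :: "nat \<times> ('m \<Rightarrow> nat) \<Rightarrow> real"
    and t0 \<rho> :: real and z0 :: "'m \<Rightarrow> real"
  assumes \<rho>: "\<rho> > 0"
    and cons: "\<And>u v. \<bar>u\<bar> \<le> \<rho> \<Longrightarrow> (\<forall>j. \<bar>v $ j - z0 j\<bar> \<le> \<rho>) \<Longrightarrow>
       ((\<lambda>a. c a * (u ^ fst a * (\<Prod>j\<in>UNIV. (v $ j - z0 j) ^ snd a j))) has_sum f (t0 + u) v) UNIV"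
    and Wsum: "(\<lambda>a. \<bar>c a\<bar> * \<rho> ^ deg a) summable_on UNIV"
begin

lemma Ft_holo:
  fixes \<phi>0 :: "complex \<Rightarrow> complex" and \<phi> :: "'m \<Rightarrow> complex \<Rightarrow> complex"
  assumes S: "open S" and h0: "\<phi>0 holomorphic_on S" and h: "\<And>j. \<phi> j holomorphic_on S"
    and b0: "\<And>w. w \<in> S \<Longrightarrow> norm (\<phi>0 w) \<le> \<rho>" and b: "\<And>w j. w \<in> S \<Longrightarrow> norm (\<phi> j w) \<le> \<rho>"
  shows "(\<lambda>w. \<Sum>\<^sub>\<infinity>a. of_real (c a) * mon a (\<phi>0 w) (\<lambda>j. \<phi> j w)) holomorphic_on S"
    and "\<And>x m. x \<in> S \<Longrightarrow> ((\<lambda>a. of_real (c a) * (deriv ^^ m) (\<lambda>w. mon a (\<phi>0 w) (\<lambda>j. \<phi> j w)) x)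
           has_sum (deriv ^^ m) (\<lambda>w. \<Sum>\<^sub>\<infinity>a. of_real (c a) * mon a (\<phi>0 w) (\<lambda>j. \<phi> j w)) x) UNIV"
    and "\<And>x. x \<in> S \<Longrightarrow> ((\<lambda>a. of_real (c a) * mon a (\<phi>0 x) (\<lambda>j. \<phi> j x))
           has_sum (\<Sum>\<^sub>\<infinity>a. of_real (c a) * mon a (\<phi>0 x) (\<lambda>j. \<phi> j x))) UNIV"
proof -
  have hm: "(\<lambda>w. mon a (\<phi>0 w) (\<lambda>j. \<phi> j w)) holomorphic_on S" for a
    unfolding mon_def using h0 h by (intro holomorphic_intros) auto
  have hT: "(\<lambda>w. of_real (c a) * mon a (\<phi>0 w) (\<lambda>j. \<phi> j w)) holomorphic_on S" for a
    using hm by (intro holomorphic_intros)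
  have bd: "\<And>a w. w \<in> S \<Longrightarrow> norm (of_real (c a) * mon a (\<phi>0 w) (\<lambda>j. \<phi> j w)) \<le> \<bar>c a\<bar> * \<rho> ^ deg a"
    unfolding norm_mult norm_of_real
    by (intro mult_left_mono mon_bound b0 b) auto
  note SH = series_holo[of S "\<lambda>a w. of_real (c a) * mon a (\<phi>0 w) (\<lambda>j. \<phi> j w)" "\<lambda>a. \<bar>c a\<bar> * \<rho> ^ deg a", OF S hT bd Wsum]
  show "(\<lambda>w. \<Sum>\<^sub>\<infinity>a. of_real (c a) * mon a (\<phi>0 w) (\<lambda>j. \<phi> j w)) holomorphic_on S"
    by (rule SH(1))
  show "\<And>x. x \<in> S \<Longrightarrow> ((\<lambda>a. of_real (c a) * mon a (\<phi>0 x) (\<lambda>j. \<phi> j x))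
           has_sum (\<Sum>\<^sub>\<infinity>a. of_real (c a) * mon a (\<phi>0 x) (\<lambda>j. \<phi> j x))) UNIV"
    by (rule SH(3))
  fix x m assume x: "x \<in> S"
  have "(deriv ^^ m) (\<lambda>w. of_real (c a) * mon a (\<phi>0 w) (\<lambda>j. \<phi> j w)) x =
        of_real (c a) * (deriv ^^ m) (\<lambda>w. mon a (\<phi>0 w) (\<lambda>j. \<phi> j w)) x" for a
    by (rule higher_deriv_cmult[OF hm x S])
  then show "((\<lambda>a. of_real (c a) * (deriv ^^ m) (\<lambda>w. mon a (\<phi>0 w) (\<lambda>j. \<phi> j w)) x)
           has_sum (deriv ^^ m) (\<lambda>w. \<Sum>\<^sub>\<infinity>a. of_real (c a) * mon a (\<phi>0 w) (\<lambda>j. \<phi> j w)) x) UNIV"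
    using SH(2)[of x m] x by simp
qed

lemma P1:
  fixes \<phi>0 :: "complex \<Rightarrow> complex" and \<phi> :: "'m \<Rightarrow> complex \<Rightarrow> complex"
    and h u :: "real \<Rightarrow> real" and vv :: "real \<Rightarrow> real^'m"
  assumes R: "R > 0" and h0: "\<phi>0 holomorphic_on ball 0 R" and h: "\<And>j. \<phi> j holomorphic_on ball 0 R"
    and b0: "\<And>w. norm w < R \<Longrightarrow> norm (\<phi>0 w) \<le> \<rho>" and b: "\<And>w j. norm w < R \<Longrightarrow> norm (\<phi> j w) \<le> \<rho>"
    and e0: "\<And>x. \<bar>x - x0\<bar> < R \<Longrightarrow> \<phi>0 (of_real (x - x0)) = of_real (u x)"
    and e: "\<And>x j. \<bar>x - x0\<bar> < R \<Longrightarrow> \<phi> j (of_real (x - x0)) = of_real (vv x $ j - z0 j)"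
    and eh: "\<And>x. \<bar>x - x0\<bar> < R \<Longrightarrow> h x = f (t0 + u x) (vv x)"
  shows "(deriv ^^ N) h x0 = Re ((deriv ^^ N) (\<lambda>w. \<Sum>\<^sub>\<infinity>a. of_real (c a) * mon a (\<phi>0 w) (\<lambda>j. \<phi> j w)) 0)"
proof -
  define G where "G = (\<lambda>w. \<Sum>\<^sub>\<infinity>a. of_real (c a) * mon a (\<phi>0 w) (\<lambda>j. \<phi> j w))"
  note FH = Ft_holo[OF open_ball h0 h]
  have Gh: "G holomorphic_on ball 0 R" unfolding G_def using FH(1) b0 b by auto
  define G2 where "G2 = (\<lambda>w. G (1 * w + - of_real x0))"
  have G2h: "G2 holomorphic_on ball (of_real x0) R"
    unfolding G2_def by (rule holomorphic_on_compose_gen[OF _ Gh, unfolded o_def])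
      (auto intro!: holomorphic_intros simp: dist_norm norm_minus_commute)
  have "(deriv ^^ N) h x0 = Re ((deriv ^^ N) G2 (of_real x0))"
  proof (rule real_hderiv[OF G2h])
    fix x assume x: "\<bar>x - x0\<bar> < R"
    have nr: "norm (of_real (x - x0) :: complex) < R" using x norm_of_real by metis
    have "((\<lambda>a. of_real (c a) * mon a (\<phi>0 (of_real (x - x0))) (\<lambda>j. \<phi> j (of_real (x - x0))))
           has_sum G (of_real (x - x0))) UNIV"
      unfolding G_def by (rule FH(3)) (use b0 b nr in auto)
    moreover have "((\<lambda>a. of_real (c a) * mon a (\<phi>0 (of_real (x - x0))) (\<lambda>j. \<phi> j (of_real (x - x0))))
           has_sum of_real (f (t0 + u x) (vv x))) UNIV"
    proof -
      have u: "\<bar>u x\<bar> \<le> \<rho>" using b0[OF nr] e0[OF x] by simp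
      have v: "\<forall>j. \<bar>vv x $ j - z0 j\<bar> \<le> \<rho>" using b[OF nr] e[OF x] by (metis norm_of_real)
      have "((\<lambda>a. of_real (c a * (u x ^ fst a * (\<Prod>j\<in>UNIV. (vv x $ j - z0 j) ^ snd a j))) :: complex)
             has_sum of_real (f (t0 + u x) (vv x))) UNIV"
        by (rule has_sum_of_real[OF cons[OF u v]])
      moreover have "\<phi>0 (of_real x - of_real x0) = of_real (u x)" using e0[OF x] by simp
      moreover have "\<And>j. \<phi> j (of_real x - of_real x0) = of_real (vv x $ j) - of_real (z0 j)" using e[OF x] by simp
      ultimately show ?thesis by (simp add: mon_def)
    qed
    ultimately have "G (of_real (x - x0)) = of_real (f (t0 + u x) (vv x))"
      using has_sum_unique by blast
    then show "h x = Re (G2 (of_real x))" by (simp add: G2_def eh[OF x])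
  qed (use R in \<open>simp add: dist_norm flip: of_real_diff\<close>)
  also have "(deriv ^^ N) G2 (of_real x0) = 1 ^ N * (deriv ^^ N) G (1 * of_real x0 + - of_real x0)"
    unfolding G2_def
    by (rule higher_deriv_compose_linear'[OF Gh open_ball open_ball])
       (use R in \<open>auto simp: dist_norm norm_minus_commute\<close>)
  finally show ?thesis by (simp add: G_def)
qed

end

lemma sum_upd_pow:
  fixes g :: "nat \<Rightarrow> real"
  assumes "k \<le> m"
  shows "(\<Sum>i\<le>m. (g(k := v)) i * l ^ i) = (\<Sum>i\<le>m. g i * l ^ i) + (v - g k) * l ^ k"
proof -
  have "(\<Sum>i\<le>m. (g(k := v)) i * l ^ i) = (\<Sum>i\<le>m. g i * l ^ i + (if i = k then (v - g k) * l ^ k else 0))"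
    by (rule sum.cong) (auto simp: algebra_simps)
  also have "\<dots> = (\<Sum>i\<le>m. g i * l ^ i) + (v - g k) * l ^ k"
    using assms by (simp add: sum.distrib)
  finally show ?thesis .
qed

context
  fixes f :: "real \<Rightarrow> real^'m \<Rightarrow> real" and c :: "nat \<times> ('m \<Rightarrow> nat) \<Rightarrow> real"
    and t0 \<rho> :: real and z0 :: "'m \<Rightarrow> real" and Y :: "'m \<Rightarrow> nat \<Rightarrow> real"
  assumes \<rho>: "\<rho> > 0"
    and cons: "\<And>u v. \<bar>u\<bar> \<le> \<rho> \<Longrightarrow> (\<forall>j. \<bar>v $ j - z0 j\<bar> \<le> \<rho>) \<Longrightarrow>
       ((\<lambda>a. c a * (u ^ fst a * (\<Prod>j\<in>UNIV. (v $ j - z0 j) ^ snd a j))) has_sum f (t0 + u) v) UNIV"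
    and Wsum: "(\<lambda>a. \<bar>c a\<bar> * \<rho> ^ deg a) summable_on UNIV"
    and Y0: "\<And>j. Y j 0 = z0 j"
begin

abbreviation Q where "Q N j \<equiv> Qp (\<lambda>j i. complex_of_real (Y j i)) (\<lambda>j. complex_of_real (z0 j)) N j"

lemma Q0: "Q N j 0 = 0"
  by (simp add: Qp_def Y0 zero_power)

lemma Q_real: "Q N j (of_real l) = of_real ((\<chi> j. \<Sum>i\<le>N. Y j i * l ^ i) $ j - z0 j)"
  by (simp add: Qp_def)

lemma Q_small: "\<epsilon> > 0 \<Longrightarrow> \<exists>R>0. \<forall>w. norm w < R \<longrightarrow> (\<forall>j. norm (Q N j w) < \<epsilon>)"
  by (rule small_ball) (auto simp: Q0 intro!: holomorphic_on_imp_continuous_on continuous_on_interior[of UNIV] holomorphic_intros)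

lemma L1: "DT_F f N t0 Y = Re ((deriv ^^ N) (\<lambda>w. \<Sum>\<^sub>\<infinity>a. of_real (c a) * mon a w (\<lambda>j. Q N j w)) 0) / fact N"
proof -
  obtain R1 where R1: "R1 > 0" "\<And>w j. norm w < R1 \<Longrightarrow> norm (Q N j w) < \<rho>"
    using Q_small[OF \<rho>, of N] by blast
  define R where "R = min R1 \<rho>"
  have R: "R > 0" using R1 \<rho> by (simp add: R_def)
  have "(deriv ^^ N) (\<lambda>l. f (t0 + l) (\<chi> j. \<Sum>i\<le>N. Y j i * l ^ i)) 0 =
        Re ((deriv ^^ N) (\<lambda>w. \<Sum>\<^sub>\<infinity>a. of_real (c a) * mon a w (\<lambda>j. Q N j w)) 0)"
  proof (rule P1[OF \<rho> cons Wsum R, where u = "\<lambda>l. l" and vv = "\<lambda>l. \<chi> j. \<Sum>i\<le>N. Y j i * l ^ i"])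
    show "(\<lambda>w. w) holomorphic_on ball 0 R" "\<And>j. Q N j holomorphic_on ball 0 R"
      by (auto intro!: holomorphic_intros)
    show "\<And>w. norm w < R \<Longrightarrow> norm w \<le> \<rho>" using R_def by auto
    show "\<And>w j. norm w < R \<Longrightarrow> norm (Q N j w) \<le> \<rho>" using R1 R_def by (auto intro: less_imp_le)
  qed (auto simp: Q_real)
  then show ?thesis by (simp add: DT_F_def)
qed

lemma L2: "\<exists>D. deriv (\<lambda>s. DT_F f m s Y) t0 = Re D / fact m \<and>
   ((\<lambda>a. of_real (c a) * of_nat (fst a) * (deriv ^^ m) (\<lambda>w. 1 * w ^ (fst a - 1) * (\<Prod>j\<in>UNIV. Q m j w ^ snd a j)) 0)
     has_sum D) UNIV"
proof -
  obtain R1 where R1: "R1 > 0" "\<And>w j. norm w < R1 \<Longrightarrow> norm (Q m j w) < \<rho>/2"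
    using Q_small[of "\<rho>/2" m] \<rho> by auto
  define R where "R = min R1 (\<rho>/2)"
  have R: "R > 0" using R1 \<rho> by (simp add: R_def)
  define \<delta> where "\<delta> = \<rho> / 2"
  have \<delta>: "\<delta> > 0" using \<rho> by (simp add: \<delta>_def)
  have eqf: "(\<lambda>w. \<Sum>\<^sub>\<infinity>a. of_real (c a) * mon a (\<mu> + w) (\<lambda>j. Q m j w)) =
     (\<lambda>w. \<Sum>\<^sub>\<infinity>a. of_real (c a) * (((\<lambda>w. w) w + \<mu> * (\<lambda>w. 1) w) ^ fst a * (\<Prod>j\<in>UNIV. Q m j w ^ snd a j)))" for \<mu>
    by (simp add: mon_def add.commute)
  obtain D where D: "((\<lambda>\<mu>. (deriv ^^ m) (\<lambda>w. \<Sum>\<^sub>\<infinity>a. of_real (c a) * (((\<lambda>w. w) w + \<mu> * (\<lambda>w. 1) w) ^ fst a * (\<Prod>j\<in>UNIV. Q m j w ^ snd a j))) 0)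
                 has_field_derivative D) (at 0)"
     "((\<lambda>a. of_real (c a) * of_nat (fst a) * (deriv ^^ m) (\<lambda>w. 1 * w ^ (fst a - 1) * (\<Prod>j\<in>UNIV. Q m j w ^ snd a j)) 0)
                 has_sum D) UNIV"
  proof -
    have "\<exists>D. ((\<lambda>\<mu>. (deriv ^^ m) (\<lambda>w. \<Sum>\<^sub>\<infinity>a. of_real (c a) * (((\<lambda>w. w) w + \<mu> * (\<lambda>w. 1) w) ^ fst a * (\<Prod>j\<in>UNIV. Q m j w ^ snd a j))) 0)
                 has_field_derivative D) (at 0)
           \<and> ((\<lambda>a. of_real (c a) * of_nat (fst a) * (deriv ^^ m) (\<lambda>w. (\<lambda>w. 1) w * ((\<lambda>w. w) w) ^ (fst a - 1) * (\<Prod>j\<in>UNIV. Q m j w ^ snd a j)) 0)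
                 has_sum D) UNIV"
    proof (rule swap[OF R \<delta>, where W = "\<lambda>a. \<bar>c a\<bar> * \<rho> ^ deg a"])
      fix a :: "nat \<times> ('m \<Rightarrow> nat)" and \<mu> w :: complex
      assume \<mu>: "norm \<mu> < \<delta>" and w: "norm w < R"
      have "norm (w + \<mu> * 1) \<le> \<rho>"
        using norm_triangle_ineq[of w \<mu>] \<mu> w by (simp add: R_def \<delta>_def)
      moreover have "norm (Q m j w) \<le> \<rho>" for j
        using R1(2)[of w j] w \<rho> by (simp add: R_def)
      ultimately have "norm (mon a (w + \<mu> * 1) (\<lambda>j. Q m j w)) \<le> \<rho> ^ deg a"
        by (intro mon_bound) auto
      then show "norm (of_real (c a) * (((\<lambda>w. w) w + \<mu> * (\<lambda>w. 1) w) ^ fst a * (\<Prod>j\<in>UNIV. Q m j w ^ snd a j))) \<le> \<bar>c a\<bar> * \<rho> ^ deg a"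
        by (simp add: norm_mult mon_def mult_left_mono)
    qed (use Wsum in \<open>auto intro!: holomorphic_intros\<close>)
    then show ?thesis using that by auto
  qed
  have "deriv (\<lambda>s. DT_F f m s Y) t0 = Re D / fact m"
  proof (rule real_deriv_from_complex[OF D(1) \<delta>])
    fix s assume s: "\<bar>s - t0\<bar> < \<delta>"
    have "(deriv ^^ m) (\<lambda>l. f (s + l) (\<chi> j. \<Sum>i\<le>m. Y j i * l ^ i)) 0 =
        Re ((deriv ^^ m) (\<lambda>w. \<Sum>\<^sub>\<infinity>a. of_real (c a) * mon a (of_real (s - t0) + w) (\<lambda>j. Q m j w)) 0)"
    proof (rule P1[OF \<rho> cons Wsum R, where u = "\<lambda>l. s - t0 + l" and vv = "\<lambda>l. \<chi> j. \<Sum>i\<le>m. Y j i * l ^ i"])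
      show "(\<lambda>w. of_real (s - t0) + w) holomorphic_on ball 0 R" "\<And>j. Q m j holomorphic_on ball 0 R"
        by (auto intro!: holomorphic_intros)
      show "norm (of_real (s - t0) + w) \<le> \<rho>" if "norm w < R" for w :: complex
      proof -
        have "norm (of_real (s - t0) + w) \<le> \<bar>s - t0\<bar> + norm w"
          using norm_triangle_ineq[of "of_real (s - t0)" w] norm_of_real[of "s - t0"]
          by (simp del: of_real_diff)
        then show ?thesis using that s by (simp add: R_def \<delta>_def)
      qed
      show "norm (Q m j w) \<le> \<rho>" if "norm w < R" for w j
        using R1(2)[of w j] that \<rho> by (simp add: R_def)
    qed (auto simp: Q_real algebra_simps)
    then show "DT_F f m s Y = Re ((deriv ^^ m) (\<lambda>w. \<Sum>\<^sub>\<infinity>a. of_real (c a) * (((\<lambda>w. w) w + of_real (s - t0) * (\<lambda>w. 1) w) ^ fst a * (\<Prod>j\<in>UNIV. Q m j w ^ snd a j))) 0) / fact m"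
      by (simp add: DT_F_def eqf)
  qed
  then show ?thesis using D(2) by blast
qed

lemma monv: "mon a w (\<lambda>j. Q m j w + (if j = j0 then \<nu> * w ^ k else 0)) =
   (Q m j0 w + \<nu> * w ^ k) ^ snd a j0 * (w ^ fst a * (\<Prod>i\<in>UNIV - {j0}. Q m i w ^ snd a i))"
proof -
  have "(\<Prod>j\<in>UNIV. (Q m j w + (if j = j0 then \<nu> * w ^ k else 0)) ^ snd a j) =
     (Q m j0 w + \<nu> * w ^ k) ^ snd a j0 * (\<Prod>j\<in>UNIV - {j0}. (Q m j w + (if j = j0 then \<nu> * w ^ k else 0)) ^ snd a j)"
    by (subst prod.remove[of UNIV j0]) auto
  also have "(\<Prod>j\<in>UNIV - {j0}. (Q m j w + (if j = j0 then \<nu> * w ^ k else 0)) ^ snd a j) = (\<Prod>i\<in>UNIV - {j0}. Q m i w ^ snd a i)"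
    by (rule prod.cong) auto
  finally show ?thesis by (simp add: mon_def mult_ac)
qed

lemma L3:
  assumes km: "k \<le> m"
  shows "\<exists>D. deriv (\<lambda>v. DT_F f m t0 (Y(j0 := (Y j0)(k := v)))) (Y j0 k) = Re D / fact m \<and>
   ((\<lambda>a. of_real (c a) * of_nat (snd a j0) * (deriv ^^ m) (\<lambda>w. w ^ k * Q m j0 w ^ (snd a j0 - 1) * (w ^ fst a * (\<Prod>i\<in>UNIV - {j0}. Q m i w ^ snd a i))) 0)
     has_sum D) UNIV"
proof -
  obtain R1 where R1: "R1 > 0" "\<And>w j. norm w < R1 \<Longrightarrow> norm (Q m j w) < \<rho>/2"
    using Q_small[of "\<rho>/2" m] \<rho> by auto
  define R where "R = min R1 (min (\<rho>/2) 1)"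
  have R: "R > 0" using R1 \<rho> by (simp add: R_def)
  define \<delta> where "\<delta> = \<rho> / 2"
  have \<delta>: "\<delta> > 0" using \<rho> by (simp add: \<delta>_def)
  have phib: "norm (Q m j w + (if j = j0 then \<nu> * w ^ k else 0)) \<le> \<rho>" if w: "norm w < R" and \<nu>: "norm \<nu> < \<delta>" for w \<nu> :: complex and j
  proof -
    have q: "norm (Q m j w) \<le> \<rho>/2" using R1(2)[of w j] w by (simp add: R_def)
    have "norm (w ^ k) \<le> 1" using w by (simp add: R_def norm_power power_le_one)
    then have "norm (\<nu> * w ^ k) \<le> \<rho>/2" using \<nu> unfolding norm_mult \<delta>_def
      by (metis less_imp_le mult_le_one norm_ge_zero mult.right_neutral mult_left_mono order_trans)
    then show ?thesis using q norm_triangle_ineq[of "Q m j w" "\<nu> * w ^ k"] \<rho> by auto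
  qed
  have wb: "norm w < R \<Longrightarrow> norm w \<le> \<rho>" for w :: complex using \<rho> by (simp add: R_def)
  obtain D where D: "((\<lambda>\<nu>. (deriv ^^ m) (\<lambda>w. \<Sum>\<^sub>\<infinity>a. of_real (c a) * ((Q m j0 w + \<nu> * w ^ k) ^ snd a j0 * (w ^ fst a * (\<Prod>i\<in>UNIV - {j0}. Q m i w ^ snd a i)))) 0)
                 has_field_derivative D) (at 0)"
     "((\<lambda>a. of_real (c a) * of_nat (snd a j0) * (deriv ^^ m) (\<lambda>w. w ^ k * Q m j0 w ^ (snd a j0 - 1) * (w ^ fst a * (\<Prod>i\<in>UNIV - {j0}. Q m i w ^ snd a i))) 0)
                 has_sum D) UNIV"
  proof -
    have "\<exists>D. ((\<lambda>\<nu>. (deriv ^^ m) (\<lambda>w. \<Sum>\<^sub>\<infinity>a. of_real (c a) * ((Q m j0 w + \<nu> * (\<lambda>w. w ^ k) w) ^ snd a j0 * (\<lambda>w. w ^ fst a * (\<Prod>i\<in>UNIV - {j0}. Q m i w ^ snd a i)) w)) 0)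
                 has_field_derivative D) (at 0)
           \<and> ((\<lambda>a. of_real (c a) * of_nat (snd a j0) * (deriv ^^ m) (\<lambda>w. (\<lambda>w. w ^ k) w * Q m j0 w ^ (snd a j0 - 1) * (\<lambda>w. w ^ fst a * (\<Prod>i\<in>UNIV - {j0}. Q m i w ^ snd a i)) w) 0)
                 has_sum D) UNIV"
    proof (rule swap[OF R \<delta>, where W = "\<lambda>a. \<bar>c a\<bar> * \<rho> ^ deg a"])
      fix a :: "nat \<times> ('m \<Rightarrow> nat)" and \<nu> w :: complex
      assume \<nu>: "norm \<nu> < \<delta>" and w: "norm w < R"
      have "norm (mon a w (\<lambda>j. Q m j w + (if j = j0 then \<nu> * w ^ k else 0))) \<le> \<rho> ^ deg a"
        by (intro mon_bound wb w phib \<nu>)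
      then show "norm (of_real (c a) * ((Q m j0 w + \<nu> * (\<lambda>w. w ^ k) w) ^ snd a j0 * (\<lambda>w. w ^ fst a * (\<Prod>i\<in>UNIV - {j0}. Q m i w ^ snd a i)) w)) \<le> \<bar>c a\<bar> * \<rho> ^ deg a"
        by (simp add: norm_mult monv mult_left_mono)
    qed (use Wsum in \<open>auto intro!: holomorphic_intros\<close>)
    then show ?thesis using that by auto
  qed
  have "deriv (\<lambda>v. DT_F f m t0 (Y(j0 := (Y j0)(k := v)))) (Y j0 k) = Re D / fact m"
  proof (rule real_deriv_from_complex[OF D(1) \<delta>])
    fix v assume v: "\<bar>v - Y j0 k\<bar> < \<delta>"
    define Y' where "Y' = Y(j0 := (Y j0)(k := v))"
    have nv: "norm (of_real (v - Y j0 k) :: complex) < \<delta>" using v by (simp del: of_real_diff)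
    have "(deriv ^^ m) (\<lambda>l. f (t0 + l) (\<chi> j. \<Sum>i\<le>m. Y' j i * l ^ i)) 0 =
        Re ((deriv ^^ m) (\<lambda>w. \<Sum>\<^sub>\<infinity>a. of_real (c a) * mon a w (\<lambda>j. Q m j w + (if j = j0 then of_real (v - Y j0 k) * w ^ k else 0))) 0)"
    proof (rule P1[OF \<rho> cons Wsum R, where u = "\<lambda>l. l" and vv = "\<lambda>l. \<chi> j. \<Sum>i\<le>m. Y' j i * l ^ i"])
      show "(\<lambda>w. w) holomorphic_on ball 0 R"
        by (auto intro!: holomorphic_intros)
      show "(\<lambda>w. Q m j w + (if j = j0 then of_real (v - Y j0 k) * w ^ k else 0)) holomorphic_on ball 0 R" for j
        by (cases "j = j0") (auto intro!: holomorphic_intros)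
      show "norm w \<le> \<rho>" if "norm w < R" for w :: complex using wb that by blast
      show "norm (Q m j w + (if j = j0 then of_real (v - Y j0 k) * w ^ k else 0)) \<le> \<rho>"
        if "norm w < R" for w :: complex and j
        using phib nv that by blast
      fix x j
      show "Q m j (of_real (x - 0)) + (if j = j0 then of_real (v - Y j0 k) * of_real (x - 0) ^ k else 0) =
            of_real ((\<chi> j. \<Sum>i\<le>m. Y' j i * x ^ i) $ j - z0 j)"
      proof (cases "j = j0")
        case True
        then show ?thesis using sum_upd_pow[OF km, of "Y j0" v x] by (simp add: Y'_def Qp_def)
      next
        case False
        then show ?thesis by (simp add: Y'_def Qp_def)
      qed
    qed auto
    then show "DT_F f m t0 (Y(j0 := (Y j0)(k := v))) =
      Re ((deriv ^^ m) (\<lambda>w. \<Sum>\<^sub>\<infinity>a. of_real (c a) * ((Q m j0 w + of_real (v - Y j0 k) * w ^ k) ^ snd a j0 * (w ^ fst a * (\<Prod>i\<in>UNIV - {j0}. Q m i w ^ snd a i)))) 0) / fact m"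
      by (simp add: DT_F_def Y'_def monv del: of_real_diff)
  qed
  then show ?thesis using D(2) by blast
qed

lemma agree_QQ: "m \<le> n \<Longrightarrow> agree m (Q n j) (Q m j)"
  by (rule agree_Qp) auto

lemma term_eq:
  assumes mn: "m \<le> n"
  shows "(deriv ^^ Suc m) (\<lambda>w. mon a w (\<lambda>j. Q n j w)) 0 =
     of_nat (fst a) * (deriv ^^ m) (\<lambda>w. 1 * w ^ (fst a - 1) * (\<Prod>j\<in>UNIV. Q m j w ^ snd a j)) 0 +
      (\<Sum>j\<in>UNIV. \<Sum>k<n. of_nat (k+1) * complex_of_real (Y j (k+1)) *
          (of_nat (snd a j) * (deriv ^^ m) (\<lambda>w. w ^ k * Q m j w ^ (snd a j - 1) *
             (w ^ fst a * (\<Prod>i\<in>UNIV - {j}. Q m i w ^ snd a i))) 0))"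
proof -
  have o: "open (UNIV :: complex set)" "(0::complex) \<in> UNIV" by auto
  have a1: "agree m (\<lambda>w. w ^ (fst a - 1) * (\<Prod>j\<in>UNIV. Q n j w ^ snd a j))
                    (\<lambda>w. w ^ (fst a - 1) * (\<Prod>j\<in>UNIV. Q m j w ^ snd a j))"
    by (intro agree_mult[OF o] agree_refl agree_prod[OF o] agree_power[OF o] agree_QQ mn)
       (auto intro!: holomorphic_intros)
  have a2: "agree m (\<lambda>w. w ^ k * Q n j w ^ (snd a j - 1) * (w ^ fst a * (\<Prod>i\<in>UNIV - {j}. Q n i w ^ snd a i)))
                    (\<lambda>w. w ^ k * Q m j w ^ (snd a j - 1) * (w ^ fst a * (\<Prod>i\<in>UNIV - {j}. Q m i w ^ snd a i)))" for j k
    by (intro agree_mult[OF o] agree_refl agree_prod[OF o] agree_power[OF o] agree_QQ mn)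
       (auto intro!: holomorphic_intros)
  have "(deriv ^^ Suc m) (\<lambda>w. mon a w (\<lambda>j. Q n j w)) 0 =
     of_nat (fst a) * (deriv ^^ m) (\<lambda>w. w ^ (fst a - 1) * (\<Prod>j\<in>UNIV. Q n j w ^ snd a j)) 0 +
      (\<Sum>j\<in>UNIV. \<Sum>k<n. of_nat (k+1) * complex_of_real (Y j (k+1)) *
          (of_nat (snd a j) * (deriv ^^ m) (\<lambda>w. w ^ k * Q n j w ^ (snd a j - 1) *
             (w ^ fst a * (\<Prod>i\<in>UNIV - {j}. Q n i w ^ snd a i))) 0))"
    unfolding mon_def by (rule hd_mon)
  also have "\<dots> = of_nat (fst a) * (deriv ^^ m) (\<lambda>w. 1 * w ^ (fst a - 1) * (\<Prod>j\<in>UNIV. Q m j w ^ snd a j)) 0 +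
      (\<Sum>j\<in>UNIV. \<Sum>k<n. of_nat (k+1) * complex_of_real (Y j (k+1)) *
          (of_nat (snd a j) * (deriv ^^ m) (\<lambda>w. w ^ k * Q m j w ^ (snd a j - 1) *
             (w ^ fst a * (\<Prod>i\<in>UNIV - {j}. Q m i w ^ snd a i))) 0))"
    using a1 a2 by (simp add: agree_def)
  finally show ?thesis .
qed

lemma L4:
  assumes n: "n \<ge> 1"
  shows "DT_F f n t0 Y = (1 / real n) *
            (deriv (\<lambda>s. DT_F f (n - 1) s Y) t0
             + (\<Sum>j\<in>UNIV. \<Sum>k<n. real (k + 1) * Y j (k + 1) *
                  deriv (\<lambda>v. DT_F f (n - 1) t0 (Y(j := (Y j)(k := v)))) (Y j k)))"
proof -
  obtain m where nm: "n = Suc m" using n by (cases n) auto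
  obtain Ds where Ds: "deriv (\<lambda>s. DT_F f m s Y) t0 = Re Ds / fact m"
    "((\<lambda>a. of_real (c a) * of_nat (fst a) * (deriv ^^ m) (\<lambda>w. 1 * w ^ (fst a - 1) * (\<Prod>j\<in>UNIV. Q m j w ^ snd a j)) 0)
     has_sum Ds) UNIV"
    using L2[of m] by blast
  define P where "P j k D \<longleftrightarrow> deriv (\<lambda>v. DT_F f m t0 (Y(j := (Y j)(k := v)))) (Y j k) = Re D / fact m \<and>
   ((\<lambda>a. of_real (c a) * of_nat (snd a j) * (deriv ^^ m) (\<lambda>w. w ^ k * Q m j w ^ (snd a j - 1) * (w ^ fst a * (\<Prod>i\<in>UNIV - {j}. Q m i w ^ snd a i))) 0)
     has_sum D) UNIV" for j k D
  define Dv where "Dv j k = (SOME D. P j k D)" for j k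
  have Dv: "P j k (Dv j k)" if "k < n" for j k
  proof -
    have "\<exists>D. P j k D" unfolding P_def by (rule L3) (use that nm in auto)
    then show ?thesis unfolding Dv_def by (rule someI_ex)
  qed
  obtain R1 where R1: "R1 > 0" "\<And>w j. norm w < R1 \<Longrightarrow> norm (Q n j w) < \<rho>"
    using Q_small[OF \<rho>, of n] by blast
  define R where "R = min R1 \<rho>"
  have R: "R > 0" using R1 \<rho> by (simp add: R_def)
  have hs: "((\<lambda>a. of_real (c a) * (deriv ^^ n) (\<lambda>w. mon a w (\<lambda>j. Q n j w)) 0) has_sum
        (deriv ^^ n) (\<lambda>w. \<Sum>\<^sub>\<infinity>a. of_real (c a) * mon a w (\<lambda>j. Q n j w)) 0) UNIV"
  proof (rule Ft_holo(2)[OF \<rho> cons Wsum open_ball])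
    show "(\<lambda>w. w) holomorphic_on ball 0 R" "\<And>j. Q n j holomorphic_on ball 0 R"
      by (auto intro!: holomorphic_intros)
    show "norm w \<le> \<rho>" if "w \<in> ball 0 R" for w :: complex using that by (simp add: R_def)
    show "norm (Q n j w) \<le> \<rho>" if "w \<in> ball 0 R" for w :: complex and j
      using R1(2)[of w j] that by (simp add: R_def)
  qed (use R in auto)
  define V where "V = Ds + (\<Sum>j\<in>UNIV. \<Sum>k<n. of_nat (k+1) * complex_of_real (Y j (k+1)) * Dv j k)"
  have hs2: "((\<lambda>a. of_real (c a) * (deriv ^^ n) (\<lambda>w. mon a w (\<lambda>j. Q n j w)) 0) has_sum V) UNIV"
  proof -
    have "((\<lambda>a. of_real (c a) * of_nat (fst a) * (deriv ^^ m) (\<lambda>w. 1 * w ^ (fst a - 1) * (\<Prod>j\<in>UNIV. Q m j w ^ snd a j)) 0 +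
       (\<Sum>j\<in>UNIV. \<Sum>k<n. of_nat (k+1) * complex_of_real (Y j (k+1)) *
          (of_real (c a) * of_nat (snd a j) * (deriv ^^ m) (\<lambda>w. w ^ k * Q m j w ^ (snd a j - 1) *
             (w ^ fst a * (\<Prod>i\<in>UNIV - {j}. Q m i w ^ snd a i))) 0))) has_sum V) UNIV"
      unfolding V_def
    proof (intro has_sum_add Ds(2) has_sum_sum_fin finite_UNIV finite_lessThan has_sum_cmult_right)
      fix j k assume "k \<in> {..<n}"
      then show "((\<lambda>a. of_real (c a) * of_nat (snd a j) * (deriv ^^ m) (\<lambda>w. w ^ k * Q m j w ^ (snd a j - 1) *
             (w ^ fst a * (\<Prod>i\<in>UNIV - {j}. Q m i w ^ snd a i))) 0) has_sum Dv j k) UNIV"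
        using Dv[of k j] by (simp add: P_def)
    qed simp
    moreover have "of_real (c a) * (deriv ^^ n) (\<lambda>w. mon a w (\<lambda>j. Q n j w)) 0 =
       of_real (c a) * of_nat (fst a) * (deriv ^^ m) (\<lambda>w. 1 * w ^ (fst a - 1) * (\<Prod>j\<in>UNIV. Q m j w ^ snd a j)) 0 +
       (\<Sum>j\<in>UNIV. \<Sum>k<n. of_nat (k+1) * complex_of_real (Y j (k+1)) *
          (of_real (c a) * of_nat (snd a j) * (deriv ^^ m) (\<lambda>w. w ^ k * Q m j w ^ (snd a j - 1) *
             (w ^ fst a * (\<Prod>i\<in>UNIV - {j}. Q m i w ^ snd a i))) 0))" for a
    proof -
      have te0: "(deriv ^^ Suc m) (\<lambda>w. mon a w (\<lambda>j. Q n j w)) 0 =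
     of_nat (fst a) * (deriv ^^ m) (\<lambda>w. 1 * w ^ (fst a - 1) * (\<Prod>j\<in>UNIV. Q m j w ^ snd a j)) 0 +
      (\<Sum>j\<in>UNIV. \<Sum>k<n. of_nat (k+1) * complex_of_real (Y j (k+1)) *
          (of_nat (snd a j) * (deriv ^^ m) (\<lambda>w. w ^ k * Q m j w ^ (snd a j - 1) *
             (w ^ fst a * (\<Prod>i\<in>UNIV - {j}. Q m i w ^ snd a i))) 0))"
        by (rule term_eq) (simp add: nm)
      then have te: "(deriv ^^ n) (\<lambda>w. mon a w (\<lambda>j. Q n j w)) 0 =
     of_nat (fst a) * (deriv ^^ m) (\<lambda>w. 1 * w ^ (fst a - 1) * (\<Prod>j\<in>UNIV. Q m j w ^ snd a j)) 0 +
      (\<Sum>j\<in>UNIV. \<Sum>k<n. of_nat (k+1) * complex_of_real (Y j (k+1)) *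
          (of_nat (snd a j) * (deriv ^^ m) (\<lambda>w. w ^ k * Q m j w ^ (snd a j - 1) *
             (w ^ fst a * (\<Prod>i\<in>UNIV - {j}. Q m i w ^ snd a i))) 0))"
        by (simp only: nm)
      show ?thesis by (simp only: te distrib_left sum_distrib_left) (simp add: mult_ac)
    qed
    ultimately show ?thesis by simp
  qed
  have Veq: "(deriv ^^ n) (\<lambda>w. \<Sum>\<^sub>\<infinity>a. of_real (c a) * mon a w (\<lambda>j. Q n j w)) 0 = V"
    using has_sum_unique[OF hs hs2] .
  define AA where "AA = deriv (\<lambda>s. DT_F f (n - 1) s Y) t0"
  define SS where "SS = (\<Sum>j\<in>UNIV. \<Sum>k<n. real (k + 1) * Y j (k + 1) *
                  deriv (\<lambda>v. DT_F f (n - 1) t0 (Y(j := (Y j)(k := v)))) (Y j k))"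
  have ch: "DT_F f n t0 Y = Re V / fact n" using L1[of n] Veq by simp
  have reV: "Re V = Re Ds + (\<Sum>j\<in>UNIV. \<Sum>k<n. real (k+1) * Y j (k+1) * Re (Dv j k))"
    by (simp add: V_def Re_sum)
  have e1: "(\<Sum>j\<in>UNIV. \<Sum>k<n. real (k+1) * Y j (k+1) * Re (Dv j k)) = fact m * SS"
    unfolding sum_distrib_left SS_def
  proof (intro sum.cong refl)
    fix j k assume k: "k \<in> {..<n}"
    then show "real (k+1) * Y j (k+1) * Re (Dv j k) = fact m * (real (k + 1) * Y j (k + 1) *
                  deriv (\<lambda>v. DT_F f (n - 1) t0 (Y(j := (Y j)(k := v)))) (Y j k))"
      using Dv[of k j] nm by (simp add: P_def)
  qed
  have e2: "Re Ds = fact m * AA" using Ds(1) nm by (simp add: AA_def)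
  have fn: "(fact n :: real) = real n * fact m" using nm by simp
  have "DT_F f n t0 Y = (fact m * AA + fact m * SS) / (real n * fact m)"
    by (simp only: ch reV e1 e2 fn)
  also have "\<dots> = (1 / real n) * (AA + SS)"
    using n by (simp add: field_simps)
  finally show ?thesis unfolding AA_def SS_def .
qed

end

lemma real_pser_ext:
  fixes yy :: "real \<Rightarrow> real" and a :: "nat \<Rightarrow> real"
  assumes rr: "rr > 0" and sm: "\<And>z. \<bar>z - t0\<bar> < rr \<Longrightarrow> (\<lambda>i. a i * (z - t0) ^ i) sums yy z"
  defines "yt \<equiv> \<lambda>w. \<Sum>\<^sub>\<infinity>i. complex_of_real (a i) * (w - of_real t0) ^ i"
  shows "yt holomorphic_on ball (of_real t0) (rr/2)"
    and "\<And>x. \<bar>x - t0\<bar> < rr/2 \<Longrightarrow> yt (of_real x) = of_real (yy x)"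
    and "\<And>l. (deriv ^^ l) yt (of_real t0) = fact l * of_real (a l)"
    and "\<And>l. (deriv ^^ l) yy t0 = fact l * a l"
proof -
  have s34: "summable (\<lambda>i. a i * (3 * rr / 4) ^ i)"
    using sm[of "t0 + 3 * rr / 4"] rr by (auto dest: sums_summable)
  have ins: "summable (\<lambda>i. norm (a i * z ^ i))" if "\<bar>z\<bar> < 3 * rr / 4" for z :: real
    by (rule powser_insidea[OF s34]) (use that rr in auto)
  have sm2: "summable (\<lambda>i. norm (complex_of_real (a i)) * (rr/2) ^ i)"
    using ins[of "rr/2"] rr by (simp add: norm_mult norm_power abs_mult)
  note PS = pser[OF _ sm2, where z = "of_real t0"]
  show hol: "yt holomorphic_on ball (of_real t0) (rr/2)" unfolding yt_def using PS(1) rr by simp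
  show eq: "yt (of_real x) = of_real (yy x)" if x: "\<bar>x - t0\<bar> < rr/2" for x
  proof -
    have s1: "(\<lambda>i. a i * (x - t0) ^ i) sums yy x" using sm[of x] x rr by simp
    have s2: "summable (\<lambda>i. norm (a i * (x - t0) ^ i))"
    proof -
      have "\<bar>x - t0\<bar> < 3 * rr / 4" using x rr by linarith
      then show ?thesis by (rule ins)
    qed
    have "((\<lambda>i. a i * (x - t0) ^ i) has_sum yy x) UNIV"
      by (rule norm_summable_imp_has_sum[OF s2 s1])
    from has_sum_of_real[OF this]
    have h1: "((\<lambda>i. complex_of_real (a i) * (of_real x - of_real t0) ^ i) has_sum of_real (yy x)) UNIV"
      by simp
    have h2: "((\<lambda>i. complex_of_real (a i) * (of_real x - of_real t0) ^ i) has_sum yt (of_real x)) UNIV"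
      unfolding yt_def by (rule PS(3)) (use x rr in \<open>auto simp: dist_norm abs_minus_commute simp flip: of_real_diff\<close>)
    show ?thesis using has_sum_unique[OF h2 h1] .
  qed
  show dl: "(deriv ^^ l) yt (of_real t0) = fact l * of_real (a l)" for l
    unfolding yt_def using PS(2) rr by simp
  show "(deriv ^^ l) yy t0 = fact l * a l" for l
  proof -
    have "(deriv ^^ l) yy t0 = Re ((deriv ^^ l) yt (of_real t0))"
      by (rule real_hderiv[OF hol]) (use eq rr in auto)
    then show ?thesis by (simp add: dl)
  qed
qed

context
  fixes f :: "real \<Rightarrow> real^'m \<Rightarrow> real" and c :: "nat \<times> ('m \<Rightarrow> nat) \<Rightarrow> real"
    and t0 \<rho> :: real and z0 :: "'m \<Rightarrow> real" and Y :: "'m \<Rightarrow> nat \<Rightarrow> real"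
    and y :: "'m \<Rightarrow> real \<Rightarrow> real" and ry :: "'m \<Rightarrow> real" and cy :: "'m \<Rightarrow> nat \<Rightarrow> real"
  assumes \<rho>: "\<rho> > 0"
    and cons: "\<And>u v. \<bar>u\<bar> \<le> \<rho> \<Longrightarrow> (\<forall>j. \<bar>v $ j - z0 j\<bar> \<le> \<rho>) \<Longrightarrow>
       ((\<lambda>a. c a * (u ^ fst a * (\<Prod>j\<in>UNIV. (v $ j - z0 j) ^ snd a j))) has_sum f (t0 + u) v) UNIV"
    and Wsum: "(\<lambda>a. \<bar>c a\<bar> * \<rho> ^ deg a) summable_on UNIV"
    and Y0: "\<And>j. Y j 0 = z0 j"
    and ry: "\<And>j. ry j > 0"
    and ys: "\<And>j z. \<bar>z - t0\<bar> < ry j \<Longrightarrow> (\<lambda>i. cy j i * (z - t0) ^ i) sums y j z"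
    and Ydef: "\<And>j i. Y j i = (deriv ^^ i) (y j) t0 / fact i"
    and z0d: "\<And>j. z0 j = y j t0"
begin

lemma L5: "DT_F f n t0 Y = (deriv ^^ n) (\<lambda>t. f t (\<chi> j. y j t)) t0 / fact n"
proof -
  define yt where "yt j = (\<lambda>w. \<Sum>\<^sub>\<infinity>i. complex_of_real (cy j i) * (w - of_real t0) ^ i)" for j
  have RP1: "yt j holomorphic_on ball (of_real t0) (ry j / 2)" for j
    unfolding yt_def by (rule real_pser_ext(1)[OF ry ys])
  have RP2: "\<bar>x - t0\<bar> < ry j / 2 \<Longrightarrow> yt j (of_real x) = of_real (y j x)" for j x
    unfolding yt_def by (rule real_pser_ext(2)[OF ry ys])
  have RP3: "(deriv ^^ l) (yt j) (of_real t0) = fact l * of_real (cy j l)" for j l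
    unfolding yt_def by (rule real_pser_ext(3)[OF ry ys])
  have RP4: "(deriv ^^ l) (y j) t0 = fact l * cy j l" for j l
    by (rule real_pser_ext(4)[OF ry ys])
  have cyY: "cy j l = Y j l" for j l
    by (simp add: Ydef RP4)
  define R0 where "R0 = Min (range (\<lambda>j. ry j / 2))"
  have R0: "R0 > 0" "\<And>j. R0 \<le> ry j / 2"
  proof -
    show "R0 > 0" using ry by (auto simp: R0_def)
    show "R0 \<le> ry j / 2" for j unfolding R0_def by (rule Min_le) auto
  qed
  define \<psi> where "\<psi> j w = yt j (w + of_real t0) - of_real (z0 j)" for j w
  have h\<psi>: "\<psi> j holomorphic_on ball 0 R0" for j
  proof -
    have "(\<lambda>w. yt j (w + of_real t0)) holomorphic_on ball 0 R0"
      by (rule holomorphic_on_compose_gen[OF _ RP1, unfolded o_def])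
         (use R0(1) R0(2)[of j] in \<open>auto intro!: holomorphic_intros simp: dist_norm\<close>)
    then show ?thesis unfolding \<psi>_def[abs_def] by (intro holomorphic_intros)
  qed
  have \<psi>0: "\<psi> j 0 = 0" for j
    using RP3[where l = 0] by (simp add: \<psi>_def cyY Y0)
  have d\<psi>: "(deriv ^^ l) (\<psi> j) 0 = fact l * of_real (Y j l)" if l: "l \<ge> 1" for j l
  proof -
    have h1: "(\<lambda>w. yt j (1 * w + of_real t0)) holomorphic_on ball 0 R0"
      by (rule holomorphic_on_compose_gen[OF _ RP1, unfolded o_def])
         (use R0(1) R0(2)[of j] in \<open>auto intro!: holomorphic_intros simp: dist_norm\<close>)
    have h1': "(\<lambda>w. yt j (w + of_real t0)) holomorphic_on ball 0 R0" using h1 by simp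
    have "(deriv ^^ l) (\<psi> j) 0 = (deriv ^^ l) (\<lambda>w. yt j (w + of_real t0)) 0 - (deriv ^^ l) (\<lambda>w. of_real (z0 j)) 0"
      unfolding \<psi>_def[abs_def] by (rule higher_deriv_diff[OF h1' _ open_ball]) (use R0 in auto)
    also have "(deriv ^^ l) (\<lambda>w. yt j (w + of_real t0)) 0 = (deriv ^^ l) (\<lambda>w. yt j (1 * w + of_real t0)) 0"
      by simp
    also have "\<dots> = 1 ^ l * (deriv ^^ l) (yt j) (1 * 0 + of_real t0)"
      by (rule higher_deriv_compose_linear'[OF RP1 open_ball[of 0 R0] open_ball])
         (use R0(1) R0(2)[of j] in \<open>auto simp: dist_norm\<close>)
    finally show ?thesis using l by (simp add: RP3 cyY)
  qed
  have agQ: "agree n (\<psi> j) (Q z0 Y n j)" for j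
    unfolding agree_def
  proof (intro allI impI)
    fix l assume ln: "l \<le> n"
    have "l = 0 \<or> l \<ge> 1" by auto
    then show "(deriv ^^ l) (\<psi> j) 0 = (deriv ^^ l) (Q z0 Y n j) 0"
    proof
      assume "l = 0"
      then show ?thesis by (simp add: \<psi>0 Q0[of \<rho> z0 c f t0 Y, OF \<rho> cons Wsum Y0])
    next
      assume l1: "l \<ge> 1"
      then show ?thesis using ln by (simp add: d\<psi> hd_Qp)
    qed
  qed
  obtain R2 where R2: "R2 > 0" "\<And>w j. norm w < R2 \<Longrightarrow> norm (\<psi> j w) < \<rho>"
  proof -
    have "isCont (\<psi> j) 0" for j
      using h\<psi>[of j] R0 by (metis centre_in_ball continuous_on_eq_continuous_at holomorphic_on_imp_continuous_on open_ball)
    then show ?thesis using small_ball[of \<psi> \<rho>] \<psi>0 \<rho> that by blast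
  qed
  obtain R3 where R3: "R3 > 0" "\<And>w j. norm w < R3 \<Longrightarrow> norm (Q z0 Y n j w) < \<rho>"
    using Q_small[of \<rho> z0 c f t0 Y, OF \<rho> cons Wsum Y0 \<rho>, of n] by blast
  define R where "R = min (min R0 R2) (min R3 \<rho>)"
  have R: "R > 0" using R0 R2 R3 \<rho> by (simp add: R_def)
  have o: "open (ball (0::complex) R)" "(0::complex) \<in> ball 0 R" using R by auto
  have h\<psi>R: "\<psi> j holomorphic_on ball 0 R" for j
    by (rule holomorphic_on_subset[OF h\<psi>]) (auto simp: R_def)
  have hsy: "((\<lambda>a. of_real (c a) * (deriv ^^ n) (\<lambda>w. mon a w (\<lambda>j. \<psi> j w)) 0) has_sum
        (deriv ^^ n) (\<lambda>w. \<Sum>\<^sub>\<infinity>a. of_real (c a) * mon a w (\<lambda>j. \<psi> j w)) 0) UNIV"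
  proof (rule Ft_holo(2)[OF \<rho> cons Wsum open_ball _ h\<psi>R])
    show "(\<lambda>w. w) holomorphic_on ball 0 R" by (auto intro!: holomorphic_intros)
    show "norm w \<le> \<rho>" if "w \<in> ball 0 R" for w :: complex using that by (simp add: R_def)
    show "norm (\<psi> j w) \<le> \<rho>" if "w \<in> ball 0 R" for w :: complex and j
      using R2(2)[of w j] that by (simp add: R_def)
  qed (use R in auto)
  have hsq: "((\<lambda>a. of_real (c a) * (deriv ^^ n) (\<lambda>w. mon a w (\<lambda>j. Q z0 Y n j w)) 0) has_sum
        (deriv ^^ n) (\<lambda>w. \<Sum>\<^sub>\<infinity>a. of_real (c a) * mon a w (\<lambda>j. Q z0 Y n j w)) 0) UNIV"
  proof (rule Ft_holo(2)[OF \<rho> cons Wsum open_ball])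
    show "(\<lambda>w. w) holomorphic_on ball 0 R" "\<And>j. Q z0 Y n j holomorphic_on ball 0 R"
      by (auto intro!: holomorphic_intros)
    show "norm w \<le> \<rho>" if "w \<in> ball 0 R" for w :: complex using that by (simp add: R_def)
    show "norm (Q z0 Y n j w) \<le> \<rho>" if "w \<in> ball 0 R" for w :: complex and j
      using R3(2)[of w j] that by (simp add: R_def)
  qed (use R in auto)
  have teq: "(deriv ^^ n) (\<lambda>w. mon a w (\<lambda>j. \<psi> j w)) 0 = (deriv ^^ n) (\<lambda>w. mon a w (\<lambda>j. Q z0 Y n j w)) 0" for a
  proof -
    have "agree n (\<lambda>w. mon a w (\<lambda>j. \<psi> j w)) (\<lambda>w. mon a w (\<lambda>j. Q z0 Y n j w))"
      unfolding mon_def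
      by (intro agree_mult[OF o] agree_refl agree_prod[OF o] agree_power[OF o] agQ h\<psi>R)
         (auto intro!: holomorphic_intros h\<psi>R)
    then show ?thesis by (simp add: agree_def)
  qed
  have geq: "(deriv ^^ n) (\<lambda>w. \<Sum>\<^sub>\<infinity>a. of_real (c a) * mon a w (\<lambda>j. \<psi> j w)) 0 =
             (deriv ^^ n) (\<lambda>w. \<Sum>\<^sub>\<infinity>a. of_real (c a) * mon a w (\<lambda>j. Q z0 Y n j w)) 0"
    using has_sum_unique[OF hsy hsq[folded teq]] .
  have "(deriv ^^ n) (\<lambda>t. f t (\<chi> j. y j t)) t0 =
        Re ((deriv ^^ n) (\<lambda>w. \<Sum>\<^sub>\<infinity>a. of_real (c a) * mon a w (\<lambda>j. \<psi> j w)) 0)"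
  proof (rule P1[OF \<rho> cons Wsum R, where u = "\<lambda>x. x - t0" and vv = "\<lambda>x. \<chi> j. y j x"])
    show "(\<lambda>w. w) holomorphic_on ball 0 R" by (auto intro!: holomorphic_intros)
    show "\<And>j. \<psi> j holomorphic_on ball 0 R" by (rule h\<psi>R)
    show "norm w \<le> \<rho>" if "norm w < R" for w :: complex using that by (simp add: R_def)
    show "norm (\<psi> j w) \<le> \<rho>" if "norm w < R" for w :: complex and j
      using R2(2)[of w j] that by (simp add: R_def)
    fix x j assume x: "\<bar>x - t0\<bar> < R"
    have "\<bar>x - t0\<bar> < ry j / 2" using x R0(2)[of j] by (simp add: R_def)
    then have "yt j (of_real x) = of_real (y j x)" by (rule RP2)
    then show "\<psi> j (of_real (x - t0)) = of_real ((\<chi> j. y j x) $ j - z0 j)"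
      by (simp add: \<psi>_def)
  qed auto
  then show ?thesis using L1[of \<rho> z0 c f t0 Y, OF \<rho> cons Wsum Y0, of n] geq by simp
qed

end

theorem corollary2:
  fixes f :: "real \<Rightarrow> real^'m \<Rightarrow> real"
    and y :: "'m \<Rightarrow> real \<Rightarrow> real"
    and Y :: "'m \<Rightarrow> nat \<Rightarrow> real"
    and D :: "real set" and U :: "(real \<times> (real^'m)) set" and t0 :: real
  assumes "open D" and "is_interval D" and "t0 \<in> D"
    and "\<forall>j. real_analytic_on (y j) D"
    and "Y = (\<lambda>j i. (deriv ^^ i) (y j) t0 / fact i)"
    and "open U" and "(\<lambda>t. (t, \<chi> j. y j t)) ` D \<subseteq> U"
    and "mv_analytic_on f U"
    and "\<not> product_form_on f U"
  shows "(\<forall>n. DT_F f n t0 Y = (deriv ^^ n) (\<lambda>t. f t (\<chi> j. y j t)) t0 / fact n)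
     \<and> DT_F f 0 t0 Y = f t0 (\<chi> j. Y j 0)
     \<and> (\<forall>n\<ge>1. DT_F f n t0 Y =
          (1 / real n) *
            (deriv (\<lambda>s. DT_F f (n - 1) s Y) t0
             + (\<Sum>j\<in>UNIV. \<Sum>k<n. real (k + 1) * Y j (k + 1) *
                  deriv (\<lambda>v. DT_F f (n - 1) t0 (Y(j := (Y j)(k := v)))) (Y j k))))"
proof -
  define z0 where "z0 j = y j t0" for j
  have Y0: "\<And>j. Y j 0 = z0 j" using assms(5) by (simp add: z0_def)
  have Ydef: "\<And>j i. Y j i = (deriv ^^ i) (y j) t0 / fact i" using assms(5) by simp
  have z0d: "\<And>j. z0 j = y j t0" by (simp add: z0_def)
  have pU: "(t0, \<chi> j. z0 j) \<in> U" using assms(3,7) by (auto simp: z0_def)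
  obtain r c where r: "r > 0" and hs: "\<And>s z. dist (s, z) (t0, \<chi> j. z0 j) < r \<Longrightarrow>
      ((\<lambda>(a, \<alpha>). c (a, \<alpha>) * (s - t0) ^ a * (\<Prod>j\<in>UNIV. (z $ j - z0 j) ^ \<alpha> j)) has_sum f s z) UNIV"
  proof -
    from assms(8) pU obtain r c where "r > 0" and
      "\<forall>s z. dist (s, z) (t0, \<chi> j. z0 j) < r \<longrightarrow>
          ((\<lambda>(a, \<alpha>). c (a, \<alpha>) * (s - fst (t0, \<chi> j. z0 j)) ^ a *
               (\<Prod>j\<in>UNIV. (z $ j - snd (t0, \<chi> j. z0 j) $ j) ^ \<alpha> j)) has_sum f s z) UNIV"
      unfolding mv_analytic_on_def by blast
    then show ?thesis by (intro that[of r c]) auto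
  qed
  define \<rho> where "\<rho> = r / (2 * (1 + real CARD('m)))"
  have \<rho>: "\<rho> > 0" using r by (simp add: \<rho>_def)
  have r\<rho>: "(1 + real CARD('m)) * \<rho> < r"
  proof -
    have pos: "1 + real CARD('m) > 0" by simp
    have "(1 + real CARD('m)) * \<rho> = r / 2" unfolding \<rho>_def using pos by (simp add: field_simps)
    then show ?thesis using r by simp
  qed
  have cons: "\<And>u v. \<bar>u\<bar> \<le> \<rho> \<Longrightarrow> (\<forall>j. \<bar>v $ j - z0 j\<bar> \<le> \<rho>) \<Longrightarrow>
       ((\<lambda>a. c a * (u ^ fst a * (\<Prod>j\<in>UNIV. (v $ j - z0 j) ^ snd a j))) has_sum f (t0 + u) v) UNIV"
  proof -
    fix u v assume u: "\<bar>u\<bar> \<le> \<rho>" and v: "\<forall>j. \<bar>v $ j - z0 j\<bar> \<le> \<rho>"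
    have d1: "dist v (\<chi> j. z0 j) \<le> real CARD('m) * \<rho>"
    proof -
      have "dist v (\<chi> j. z0 j) = norm (v - (\<chi> j. z0 j))" by (simp add: dist_norm)
      also have "\<dots> \<le> (\<Sum>j\<in>UNIV. \<bar>(v - (\<chi> j. z0 j)) $ j\<bar>)" by (rule norm_le_l1_cart)
      also have "\<dots> = (\<Sum>j\<in>UNIV. \<bar>v $ j - z0 j\<bar>)" by simp
      also have "\<dots> \<le> of_nat (card (UNIV :: 'm set)) * \<rho>"
        by (rule sum_bounded_above) (use v in auto)
      finally show ?thesis by simp
    qed
    have "dist (t0 + u, v) (t0, \<chi> j. z0 j) = sqrt ((dist (t0 + u) t0)\<^sup>2 + (dist v (\<chi> j. z0 j))\<^sup>2)"
      by (rule dist_Pair_Pair)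
    also have "\<dots> \<le> dist (t0 + u) t0 + dist v (\<chi> j. z0 j)"
      by (rule sqrt_sum_squares_le_sum) auto
    also have "\<dots> \<le> \<rho> + real CARD('m) * \<rho>" using u d1 by (simp add: dist_real_def)
    also have "\<dots> < r" using r\<rho> by (simp add: algebra_simps)
    finally have "dist (t0 + u, v) (t0, \<chi> j. z0 j) < r" .
    from hs[OF this]
    show "((\<lambda>a. c a * (u ^ fst a * (\<Prod>j\<in>UNIV. (v $ j - z0 j) ^ snd a j))) has_sum f (t0 + u) v) UNIV"
      by (simp add: case_prod_unfold mult.assoc)
  qed
  have Wsum: "(\<lambda>a. \<bar>c a\<bar> * \<rho> ^ deg a) summable_on UNIV"
  proof -
    have H: "((\<lambda>a. c a * (\<rho> ^ fst a * (\<Prod>j\<in>UNIV. ((\<chi> j. z0 j + \<rho>) $ j - z0 j) ^ snd a j))) has_sum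
           f (t0 + \<rho>) (\<chi> j. z0 j + \<rho>)) UNIV"
      by (rule cons) (use \<rho> in auto)
    have E: "(\<lambda>a. c a * (\<rho> ^ fst a * (\<Prod>j\<in>UNIV. ((\<chi> j. z0 j + \<rho>) $ j - z0 j) ^ snd a j))) =
        (\<lambda>a. c a * \<rho> ^ deg a)"
    proof
      fix a :: "nat \<times> ('m \<Rightarrow> nat)"
      have "(\<Prod>j\<in>UNIV. ((\<chi> j. z0 j + \<rho>) $ j - z0 j) ^ snd a j) = (\<Prod>j\<in>UNIV. \<rho> ^ snd a j)" by simp
      also have "\<dots> = \<rho> ^ (\<Sum>j\<in>UNIV. snd a j)" by (simp only: power_sum)
      finally show "c a * (\<rho> ^ fst a * (\<Prod>j\<in>UNIV. ((\<chi> j. z0 j + \<rho>) $ j - z0 j) ^ snd a j)) = c a * \<rho> ^ deg a"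
        by (simp only: deg_def power_add)
    qed
    have "(\<lambda>a. c a * \<rho> ^ deg a) summable_on UNIV"
      by (rule has_sum_imp_summable[OF H[unfolded E]])
    then have "(\<lambda>a. norm (c a * \<rho> ^ deg a)) summable_on UNIV"
      by (rule summable_on_iff_abs_summable_on_real[THEN iffD1])
    then show ?thesis using \<rho> by (simp add: abs_mult)
  qed
  have ex: "\<forall>j. \<exists>rr. \<exists>cc. rr > 0 \<and> (\<forall>z. \<bar>z - t0\<bar> < rr \<longrightarrow> (\<lambda>i. cc i * (z - t0) ^ i) sums y j z)"
    using assms(3,4) unfolding real_analytic_on_def by blast
  obtain ry where ry': "\<forall>j. \<exists>cc. ry j > 0 \<and> (\<forall>z. \<bar>z - t0\<bar> < ry j \<longrightarrow> (\<lambda>i. cc i * (z - t0) ^ i) sums y j z)"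
    using choice[OF ex] by blast
  obtain cy where cy': "\<forall>j. ry j > 0 \<and> (\<forall>z. \<bar>z - t0\<bar> < ry j \<longrightarrow> (\<lambda>i. cy j i * (z - t0) ^ i) sums y j z)"
    using choice[OF ry'] by blast
  have ryc: "\<And>j. ry j > 0" "\<And>j z. \<bar>z - t0\<bar> < ry j \<Longrightarrow> (\<lambda>i. cy j i * (z - t0) ^ i) sums y j z"
    using cy' by auto
  have P1: "\<forall>n. DT_F f n t0 Y = (deriv ^^ n) (\<lambda>t. f t (\<chi> j. y j t)) t0 / fact n"
    using L5[of \<rho> z0 c f t0 Y ry cy y, OF \<rho> cons Wsum Y0 ryc(1) ryc(2) Ydef z0d] by blast
  have P2: "DT_F f 0 t0 Y = f t0 (\<chi> j. Y j 0)"
    by (simp add: DT_F_def)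
  have P3: "\<forall>n\<ge>1. DT_F f n t0 Y =
          (1 / real n) *
            (deriv (\<lambda>s. DT_F f (n - 1) s Y) t0
             + (\<Sum>j\<in>UNIV. \<Sum>k<n. real (k + 1) * Y j (k + 1) *
                  deriv (\<lambda>v. DT_F f (n - 1) t0 (Y(j := (Y j)(k := v)))) (Y j k)))"
    using L4[of \<rho> z0 c f t0 Y, OF \<rho> cons Wsum Y0] by blast
  show ?thesis using P1 P2 P3 by blast
qed

end
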